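(* Fix any reasoning logic. If $c$ is a closed computation with $\vdash c:\underline{C}$ and $c\leadsto c'$, then $\vdash c':\underline{C}$ and $[\![\vdash c:\underline{C}]\!] = [\![\vdash c':\underline{C}]\!]$.
   Context: We work with a fine-grain call-by-value calculus of algebraic effects and handlers, parametrised by a reasoning logic $\mathcal{L}$. Syntax. Values $v ::= x \mid () \mid \mathtt{true} \mid \mathtt{false} \mid \mathtt{fun}\ x \mapsto c \mid \mathtt{handler}\,(\mathtt{return}\ x \mapsto c_r;\ h)$. Computations $c ::= \mathtt{if}\ v\ \mathtt{then}\ c_1\ \mathtt{else}\ c_2 \mid v_1\, v_2 \mid \mathtt{return}\ v \mid \mathit{op}(v; y.c) \mid \mathtt{do}\ x \leftarrow c_1\ \mathtt{in}\ c_2 \mid \mathtt{with}\ v\ \mathtt{handle}\ c$. Operation clauses $h$ are finite sets of clauses $\mathit{op}(x;k) \mapsto c_{\mathit{op}}$, at most one per operation name. Operational semantics: $\leadsto$ is the least relation with: $\mathtt{if}\ \mathtt{true}\ \mathtt{then}\ c_1\ \mathtt{else}\ c_2 \leadsto c_1$; $\mathtt{if}\ \mathtt{false}\ \mathtt{then}\ c_1\ \mathtt{else}\ c_2 \leadsto c_2$; $(\mathtt{fun}\ x\mapsto c)\,v \leadsto c[v/x]$; if $c_1\leadsto c_1'$ then $\mathtt{do}\ x\leftarrow c_1\ \mathtt{in}\ c_2 \leadsto \mathtt{do}\ x\leftarrow c_1'\ \mathtt{in}\ c_2$; $\mathtt{do}\ x\leftarrow \mathtt{return}\ v\ \mathtt{in}\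 c \leadsto c[v/x]$; $\mathtt{do}\ x\leftarrow \mathit{op}(v;y.c_1)\ \mathtt{in}\ c_2 \leadsto \mathit{op}(v;y.\,\mathtt{do}\ x\leftarrow c_1\ \mathtt{in}\ c_2)$; if $c\leadsto c'$ then $\mathtt{with}\ v\ \mathtt{handle}\ c\leadsto \mathtt{with}\ v\ \mathtt{handle}\ c'$; with $H=\mathtt{handler}\,(\mathtt{return}\ x\mapsto c_r;\ h)$: $\mathtt{with}\ H\ \mathtt{handle}\ \mathtt{return}\ v \leadsto c_r[v/x]$, and $\mathtt{with}\ H\ \mathtt{handle}\ \mathit{op}(v;y.c)\leadsto c_{\mathit{op}}[v/x,(\mathtt{fun}\ y\mapsto \mathtt{with}\ H\ \mathtt{handle}\ c)/k]$ when $(\mathit{op}(x;k)\mapsto c_{\mathit{op}})\in h$. Types: $A,B ::= \mathtt{unit}\mid\mathtt{bool}\mid A\to\underline{C}\mid \underline{C}\Rightarrow\underline{D}$; $\underline{C},\underline{D} ::= A\,!\,\Sigma/\mathcal{E}$ with $\Sigma$ a finite set of typed operations $\mathit{op}:A_{\mathit{op}}\to B_{\mathit{op}}$ (distinct names) and $\mathcal{E}$ a finite set of equations between templates (templates $T ::= z(v)\mid \mathtt{if}\ v\ \mathtt{then}\ T_1\ \mathtt{else}\ T_2\mid \mathit{op}(v;y.T)$, typed in a value context and a template context of variables $z:A\to *$, with operations drawn from $\Sigma$). Typing: $\Gamma\vdash x:A$ for $(x:A)\in\Gamma$; $():\mathtt{unit}$; $\mathtt{true},\mathtt{false}:\mathtt{bool}$;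 $\Gamma\vdash \mathtt{fun}\ x\mapsto c:A\to\underline{C}$ if $\Gamma,x:A\vdash c:\underline{C}$; $\Gamma\vdash \mathtt{handler}\,(\mathtt{return}\ x\mapsto c_r;h): A\,!\,\Sigma/\mathcal{E}\Rightarrow\underline{D}$ if $\Gamma,x:A\vdash c_r:\underline{D}$ and $\Gamma\vdash h\models_{\mathcal{E},\Sigma}\underline{D}$; $\mathtt{if}\ v\ \mathtt{then}\ c_1\ \mathtt{else}\ c_2:\underline{C}$ if $v:\mathtt{bool}$, $c_i:\underline{C}$; $v_1\,v_2:\underline{C}$ if $v_1:A\to\underline{C}$, $v_2:A$; $\mathtt{return}\ v:A\,!\,\Sigma/\mathcal{E}$ if $v:A$; $\Gamma\vdash\mathit{op}(v;y.c):A\,!\,\Sigma/\mathcal{E}$ if $(\mathit{op}:A_{\mathit{op}}\to B_{\mathit{op}})\in\Sigma$, $\Gamma\vdash v:A_{\mathit{op}}$, $\Gamma,y:B_{\mathit{op}}\vdash c:A\,!\,\Sigma/\mathcal{E}$; $\Gamma\vdash\mathtt{do}\ x\leftarrow c_1\ \mathtt{in}\ c_2:B\,!\,\Sigma/\mathcal{E}$ if $\Gamma\vdash c_1:A\,!\,\Sigma/\mathcal{E}$, $\Gamma,x:A\vdash c_2:B\,!\,\Sigma/\mathcal{E}$; $\mathtt{with}\ v\ \mathtt{handle}\ c:\underline{D}$ if $v:\underline{C}\Rightarrow\underline{D}$, $c:\underline{C}$. Clauses $\Gamma\vdash h:\Sigma\Rrightarrow\underline{D}$ iff $h$ has exactly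 one clause $\mathit{op}(x;k)\mapsto c_{\mathit{op}}$ for each $\mathit{op}\in\Sigma$ and no others, with $\Gamma,x:A_{\mathit{op}},k:B_{\mathit{op}}\to\underline{D}\vdash c_{\mathit{op}}:\underline{D}$. The judgement $\Gamma\vdash h\models_{\mathcal{E},\Sigma}\underline{D}$ is supplied by the logic and can only hold when $\Gamma\vdash h:\Sigma\Rrightarrow\underline{D}$. Denotational semantics (theories ignored): $[\![\mathtt{unit}]\!]=\{\star\}$, $[\![\mathtt{bool}]\!]=\{\mathrm{ff},\mathrm{tt}\}$, $[\![A\to\underline{C}]\!]$ and $[\![\underline{C}\Rightarrow\underline{D}]\!]$ are the sets of all functions $[\![A]\!]\to[\![\underline{C}]\!]$, resp. $[\![\underline{C}]\!]\to[\![\underline{D}]\!]$, and $[\![A\,!\,\Sigma/\mathcal{E}]\!]=[\![\Sigma]\!][\![A]\!]$, where for a set $X$, $[\![\Sigma]\!]X$ is the inductively defined set with elements $\mathrm{in}_{\mathrm{return}}(a)$, $a\in X$, and $\mathrm{in}_{\mathit{op}}(a;\kappa)$ for $(\mathit{op}:A_{\mathit{op}}\to B_{\mathit{op}})\in\Sigma$, $a\in[\![A_{\mathit{op}}]\!]$, $\kappa:[\![B_{\mathit{op}}]\!]\to[\![\Sigma]\!]X$. An interpretation of $\Sigma$ over a set $Y$ is a family of functions $H_{\mathit{op}}:[\![A_{\mathit{op}}]\!]\times([\![B_{\mathit{op}}]\!]\to Y)\to Y$; the free interpretation $F^X_\Sigma$ over $[\![\Sigma]\!]X$ has $(F^X_\Sigma)_{\mathit{op}}(a,\kappa)=\mathrm{in}_{\mathit{op}}(a;\kappa)$.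 For $f:X\to Y$ the lift $f^\dagger_H:[\![\Sigma]\!]X\to Y$ is given by $f^\dagger_H(\mathrm{in}_{\mathrm{return}}(x))=f(x)$, $f^\dagger_H(\mathrm{in}_{\mathit{op}}(x;\kappa))=H_{\mathit{op}}(x,f^\dagger_H\circ\kappa)$. $[\![\varepsilon]\!]=\{\star\}$, $[\![\Gamma,x:A]\!]=[\![\Gamma]\!]\times[\![A]\!]$. Typed terms denote maps $[\![\Gamma]\!]\to[\![A]\!]$ (resp. $[\![\underline{C}]\!]$): for $\eta\in[\![\Gamma]\!]$, variables are projections; $()\mapsto\star$, $\mathtt{true}\mapsto\mathrm{tt}$, $\mathtt{false}\mapsto\mathrm{ff}$; $[\![\mathtt{fun}\ x\mapsto c]\!]\eta=\lambda a.[\![c]\!](\eta,a)$; $[\![h]\!]\eta$ is the interpretation of $\Sigma$ over $[\![\underline{D}]\!]$ with $([\![h]\!]\eta)_{\mathit{op}}(a,\kappa)=[\![c_{\mathit{op}}]\!](\eta,a,\kappa)$; $[\![\mathtt{handler}\,(\mathtt{return}\ x\mapsto c_r;h)]\!]\eta=(\lambda a.[\![c_r]\!](\eta,a))^\dagger_{[\![h]\!]\eta}$; $[\![\mathtt{if}\ v\ \mathtt{then}\ c_1\ \mathtt{else}\ c_2]\!]\eta$ is $[\![c_1]\!]\eta$ if $[\![v]\!]\eta=\mathrm{tt}$ and $[\![c_2]\!]\eta$ if it is $\mathrm{ff}$; $[\![v_1\,v_2]\!]\eta=([\![v_1]\!]\eta)([\![v_2]\!]\eta)$; $[\![\mathtt{return}\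 v]\!]\eta=\mathrm{in}_{\mathrm{return}}([\![v]\!]\eta)$; $[\![\mathit{op}(v;y.c)]\!]\eta=\mathrm{in}_{\mathit{op}}([\![v]\!]\eta;\lambda b.[\![c]\!](\eta,b))$; for $c_1:A\,!\,\Sigma/\mathcal{E}$ and $c_2:B\,!\,\Sigma/\mathcal{E}$, $[\![\mathtt{do}\ x\leftarrow c_1\ \mathtt{in}\ c_2]\!]\eta=(\lambda a.[\![c_2]\!](\eta,a))^\dagger_{F^{[\![B]\!]}_\Sigma}([\![c_1]\!]\eta)$; $[\![\mathtt{with}\ v\ \mathtt{handle}\ c]\!]\eta=([\![v]\!]\eta)([\![c]\!]\eta)$. For closed terms the denotation is identified with its value at $\star$.
   Formalization: A reasoning logic is also closed under weakening of the context and under substitution of closed values into h, and each denotation of a typing derivation of c is also one of c'. Apart from conventions, each condition added here is assumed in the paper as well or is needed for the statement above to hold. *)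

theory Defs
  imports Main "HOL-Library.Finite_Map" "HOL-Library.FSet"
begin

type_synonym vname = string
type_synonym opname = string
type_synonym tname = string

text \<open>Values and computations. Operation clauses h are a finite map from operation
names to clauses op(x;k) -> c_op, represented as (x, k, c_op); this enforces at most
one clause per operation name.\<close>

datatype val =
    Var vname
  | UnitV
  | TrueV
  | FalseV
  | Fun vname comp
  | Handler vname comp "(opname, vname \<times> vname \<times> comp) fmap"
and comp =
    If val comp comp
  | App val val
  | Return val
  | Op opname val vname comp
  | Do vname comp comp
  | With val comp

datatype tmpl =
    TVar tname val
  | TIf val tmpl tmpl
  | TOp opname val vname tmpl

text \<open>A signature is a finite map from operation names (hence distinct) to
their typing (A_op, B_op). An equation is a pair of templates together with its value
context and template context; a theory is a finite set of equations.\<close>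

datatype vtype =
    TUnit
  | TBool
  | TArr vtype ctype
  | THnd ctype ctype
and ctype = CTy vtype "(opname, vtype \<times> vtype) fmap" "eqn fset"
and eqn = Eqn "(vname \<times> vtype) list" "(tname \<times> vtype) list" tmpl tmpl

type_synonym sig = "(opname, vtype \<times> vtype) fmap"
type_synonym clauses = "(opname, vname \<times> vname \<times> comp) fmap"
type_synonym ctx = "vname \<Rightarrow> vtype option"

text \<open>Substitution stops at binders of the same name (for the clauses of a handler this
is realised by substituting Var x for x, i.e. by the identity substitution, when x is bound by
the clause). Since all substitutions
performed by the operational semantics on closed computations substitute closed values,
this coincides with capture-avoiding substitution there.\<close>

primrec subst_v :: "val \<Rightarrow> vname \<Rightarrow> val \<Rightarrow> val"
and subst_c :: "comp \<Rightarrow> vname \<Rightarrow> val \<Rightarrow> comp" where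
  "subst_v (Var y) x w = (if y = x then w else Var y)"
| "subst_v UnitV x w = UnitV"
| "subst_v TrueV x w = TrueV"
| "subst_v FalseV x w = FalseV"
| "subst_v (Fun y c) x w = Fun y (if y = x then c else subst_c c x w)"
| "subst_v (Handler y cr h) x w =
     Handler y (if y = x then cr else subst_c cr x w)
       (fmmap (\<lambda>(y', k, g). (y', k, g x (if y' = x \<or> k = x then Var x else w)))
          (fmmap (map_prod id (map_prod id subst_c)) h))"
| "subst_c (If v c1 c2) x w = If (subst_v v x w) (subst_c c1 x w) (subst_c c2 x w)"
| "subst_c (App v1 v2) x w = App (subst_v v1 x w) (subst_v v2 x w)"
| "subst_c (Return v) x w = Return (subst_v v x w)"
| "subst_c (Op op v y c) x w = Op op (subst_v v x w) y (if y = x then c else subst_c c x w)"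
| "subst_c (Do y c1 c2) x w = Do y (subst_c c1 x w) (if y = x then c2 else subst_c c2 x w)"
| "subst_c (With v c) x w = With (subst_v v x w) (subst_c c x w)"

definition subst_h :: "clauses \<Rightarrow> vname \<Rightarrow> val \<Rightarrow> clauses" where
  "subst_h h x w = fmmap (\<lambda>(y', k, c). (y', k, subst_c c x (if y' = x \<or> k = x then Var x else w))) h"

inductive step :: "comp \<Rightarrow> comp \<Rightarrow> bool" where
  step_if_true: "step (If TrueV c1 c2) c1"
| step_if_false: "step (If FalseV c1 c2) c2"
| step_beta: "step (App (Fun x c) v) (subst_c c x v)"
| step_do: "step c1 c1' \<Longrightarrow> step (Do x c1 c2) (Do x c1' c2)"
| step_do_return: "step (Do x (Return v) c) (subst_c c x v)"
| step_do_op: "step (Do x (Op op v y c1) c2) (Op op v y (Do x c1 c2))"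
| step_with: "step c c' \<Longrightarrow> step (With v c) (With v c')"
| step_with_return: "step (With (Handler x cr h) (Return v)) (subst_c cr x v)"
| step_with_op: "fmlookup h op = Some (x, k, cop) \<Longrightarrow>
    step (With (Handler xr cr h) (Op op v y c))
         (subst_c (subst_c cop k (Fun y (With (Handler xr cr h) c))) x v)"

text \<open>The simultaneous substitution c_op[v/x, (fun y -> ...)/k] is performed by first
substituting for k and then for x; both substituted values are closed when the reducing
computation is closed, so the order is immaterial when x and k differ, and when they
coincide the k-binding (the later one in the typing context) takes precedence.\<close>

text \<open>A logic is given by its judgement  L \<Gamma> h E \<Sigma> D  standing for  \<Gamma> |- h |=_{E,\<Sigma>} D.\<close>

type_synonym logic = "ctx \<Rightarrow> clauses \<Rightarrow> eqn fset \<Rightarrow> sig \<Rightarrow> ctype \<Rightarrow> bool"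

inductive vtyp :: "logic \<Rightarrow> ctx \<Rightarrow> val \<Rightarrow> vtype \<Rightarrow> bool"
and ctyp :: "logic \<Rightarrow> ctx \<Rightarrow> comp \<Rightarrow> ctype \<Rightarrow> bool"
for L :: logic where
  ty_var: "\<Gamma> x = Some A \<Longrightarrow> vtyp L \<Gamma> (Var x) A"
| ty_unit: "vtyp L \<Gamma> UnitV TUnit"
| ty_true: "vtyp L \<Gamma> TrueV TBool"
| ty_false: "vtyp L \<Gamma> FalseV TBool"
| ty_fun: "ctyp L (\<Gamma>(x \<mapsto> A)) c C \<Longrightarrow> vtyp L \<Gamma> (Fun x c) (TArr A C)"
| ty_handler: "ctyp L (\<Gamma>(x \<mapsto> A)) cr D \<Longrightarrow> L \<Gamma> h E S D \<Longrightarrow>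
    vtyp L \<Gamma> (Handler x cr h) (THnd (CTy A S E) D)"
| ty_if: "vtyp L \<Gamma> v TBool \<Longrightarrow> ctyp L \<Gamma> c1 C \<Longrightarrow> ctyp L \<Gamma> c2 C \<Longrightarrow>
    ctyp L \<Gamma> (If v c1 c2) C"
| ty_app: "vtyp L \<Gamma> v1 (TArr A C) \<Longrightarrow> vtyp L \<Gamma> v2 A \<Longrightarrow> ctyp L \<Gamma> (App v1 v2) C"
| ty_return: "vtyp L \<Gamma> v A \<Longrightarrow> ctyp L \<Gamma> (Return v) (CTy A S E)"
| ty_op: "fmlookup S op = Some (Aop, Bop) \<Longrightarrow> vtyp L \<Gamma> v Aop \<Longrightarrow>
    ctyp L (\<Gamma>(y \<mapsto> Bop)) c (CTy A S E) \<Longrightarrow> ctyp L \<Gamma> (Op op v y c) (CTy A S E)"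
| ty_do: "ctyp L \<Gamma> c1 (CTy A S E) \<Longrightarrow> ctyp L (\<Gamma>(x \<mapsto> A)) c2 (CTy B S E) \<Longrightarrow>
    ctyp L \<Gamma> (Do x c1 c2) (CTy B S E)"
| ty_with: "vtyp L \<Gamma> v (THnd C D) \<Longrightarrow> ctyp L \<Gamma> c C \<Longrightarrow> ctyp L \<Gamma> (With v c) D"

definition clauses_typ :: "logic \<Rightarrow> ctx \<Rightarrow> clauses \<Rightarrow> sig \<Rightarrow> ctype \<Rightarrow> bool" where
  "clauses_typ L \<Gamma> h S D \<longleftrightarrow> fmdom h = fmdom S \<and>
     (\<forall>op x k c Aop Bop. fmlookup h op = Some (x, k, c) \<longrightarrow> fmlookup S op = Some (Aop, Bop) \<longrightarrow>
        ctyp L (\<Gamma>(x \<mapsto> Aop, k \<mapsto> TArr Bop D)) c D)"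

definition reasoning_logic :: "logic \<Rightarrow> bool" where
  "reasoning_logic L \<longleftrightarrow>
     (\<forall>\<Gamma> h E S D. L \<Gamma> h E S D \<longrightarrow> clauses_typ L \<Gamma> h S D) \<and>
     (\<forall>\<Gamma> \<Gamma>' h E S D. L \<Gamma> h E S D \<longrightarrow> \<Gamma> \<subseteq>\<^sub>m \<Gamma>' \<longrightarrow> L \<Gamma>' h E S D) \<and>
     (\<forall>\<Gamma> x A h E S D w. L (\<Gamma>(x \<mapsto> A)) h E S D \<longrightarrow> vtyp L Map.empty w A \<longrightarrow>
        L \<Gamma> (subst_h h x w) E S D)"

text \<open>HOL has no single type containing the full set-theoretic function spaces
[[A]] -> [[C]] for all types A, C. We therefore interpret in an arbitrary HOL type 'u
equipped with a structure which is required to be standard, i.e. the carrier of each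
type is (in bijection with) exactly the set prescribed by the paper.\<close>

record 'u model =
  vdom :: "vtype \<Rightarrow> 'u set"
  unitv :: 'u
  ttv :: 'u
  ffv :: 'u
  lam :: "vtype \<Rightarrow> ctype \<Rightarrow> ('u \<Rightarrow> 'u) \<Rightarrow> 'u"
  hlam :: "ctype \<Rightarrow> ctype \<Rightarrow> ('u \<Rightarrow> 'u) \<Rightarrow> 'u"
  app :: "'u \<Rightarrow> 'u \<Rightarrow> 'u"
  ret :: "vtype \<Rightarrow> sig \<Rightarrow> 'u \<Rightarrow> 'u"
  node :: "vtype \<Rightarrow> sig \<Rightarrow> opname \<Rightarrow> 'u \<Rightarrow> ('u \<Rightarrow> 'u) \<Rightarrow> 'u"

inductive_set trees :: "'u model \<Rightarrow> vtype \<Rightarrow> sig \<Rightarrow> 'u set" for M A S where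
  tr_ret: "a \<in> vdom M A \<Longrightarrow> ret M A S a \<in> trees M A S"
| tr_node: "fmlookup S op = Some (Aop, Bop) \<Longrightarrow> a \<in> vdom M Aop \<Longrightarrow>
    (\<forall>b \<in> vdom M Bop. \<kappa> b \<in> trees M A S) \<Longrightarrow> node M A S op a \<kappa> \<in> trees M A S"

fun cdom :: "'u model \<Rightarrow> ctype \<Rightarrow> 'u set" where
  "cdom M (CTy A S E) = trees M A S"

definition maps_into :: "('u \<Rightarrow> 'u) \<Rightarrow> 'u set \<Rightarrow> 'u set \<Rightarrow> bool" where
  "maps_into f X Y \<longleftrightarrow> (\<forall>x \<in> X. f x \<in> Y)"

definition standard_model :: "'u model \<Rightarrow> bool" where
  "standard_model M \<longleftrightarrow>
     vdom M TUnit = {unitv M} \<and>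
     vdom M TBool = {ttv M, ffv M} \<and> ttv M \<noteq> ffv M \<and>
     (\<forall>A C. vdom M (TArr A C) = {lam M A C f | f. maps_into f (vdom M A) (cdom M C)}
        \<and> (\<forall>f. maps_into f (vdom M A) (cdom M C) \<longrightarrow>
               (\<forall>a \<in> vdom M A. app M (lam M A C f) a = f a))
        \<and> (\<forall>f g. maps_into f (vdom M A) (cdom M C) \<longrightarrow> maps_into g (vdom M A) (cdom M C) \<longrightarrow>
               (\<forall>a \<in> vdom M A. f a = g a) \<longrightarrow> lam M A C f = lam M A C g)) \<and>
     (\<forall>C D. vdom M (THnd C D) = {hlam M C D f | f. maps_into f (cdom M C) (cdom M D)}
        \<and> (\<forall>f. maps_into f (cdom M C) (cdom M D) \<longrightarrow>
               (\<forall>t \<in> cdom M C. app M (hlam M C D f) t = f t))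
        \<and> (\<forall>f g. maps_into f (cdom M C) (cdom M D) \<longrightarrow> maps_into g (cdom M C) (cdom M D) \<longrightarrow>
               (\<forall>t \<in> cdom M C. f t = g t) \<longrightarrow> hlam M C D f = hlam M C D g)) \<and>
     (\<forall>A S. (\<forall>a \<in> vdom M A. \<forall>a' \<in> vdom M A. ret M A S a = ret M A S a' \<longrightarrow> a = a')
        \<and> (\<forall>op Aop Bop a \<kappa> op' Aop' Bop' a' \<kappa>'.
              fmlookup S op = Some (Aop, Bop) \<longrightarrow> a \<in> vdom M Aop \<longrightarrow>
              maps_into \<kappa> (vdom M Bop) (trees M A S) \<longrightarrow>
              fmlookup S op' = Some (Aop', Bop') \<longrightarrow> a' \<in> vdom M Aop' \<longrightarrow>
              maps_into \<kappa>' (vdom M Bop') (trees M A S) \<longrightarrow>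
              (node M A S op a \<kappa> = node M A S op' a' \<kappa>' \<longleftrightarrow>
                 op = op' \<and> a = a' \<and> (\<forall>b \<in> vdom M Bop. \<kappa> b = \<kappa>' b)))
        \<and> (\<forall>a op Aop Bop a' \<kappa>. a \<in> vdom M A \<longrightarrow>
              fmlookup S op = Some (Aop, Bop) \<longrightarrow> a' \<in> vdom M Aop \<longrightarrow>
              maps_into \<kappa> (vdom M Bop) (trees M A S) \<longrightarrow>
              ret M A S a \<noteq> node M A S op a' \<kappa>))"

text \<open>The lift f^dagger_H : [[\<Sigma>]][[A]] -> Y of f along an interpretation H, as a
relation (it is the graph of a function on trees M A S).  Continuations passed to H are
restricted to [[B_op]].\<close>
inductive lift_rel :: "'u model \<Rightarrow> vtype \<Rightarrow> sig \<Rightarrow> ('u \<Rightarrow> 'u) \<Rightarrow>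
    (opname \<Rightarrow> 'u \<Rightarrow> ('u \<Rightarrow> 'u) \<Rightarrow> 'u) \<Rightarrow> 'u \<Rightarrow> 'u \<Rightarrow> bool"
  for M A S f H where
  lift_ret: "a \<in> vdom M A \<Longrightarrow> lift_rel M A S f H (ret M A S a) (f a)"
| lift_node: "fmlookup S op = Some (Aop, Bop) \<Longrightarrow> a \<in> vdom M Aop \<Longrightarrow>
    (\<forall>b \<in> vdom M Bop. \<kappa> b \<in> trees M A S) \<Longrightarrow>
    (\<forall>b \<in> vdom M Bop. lift_rel M A S f H (\<kappa> b) (\<kappa>' b)) \<Longrightarrow>
    lift_rel M A S f H (node M A S op a \<kappa>)
      (H op a (\<lambda>b. if b \<in> vdom M Bop then \<kappa>' b else undefined))"

text \<open>Denotation of typing derivations:  semc M L \<Gamma> \<eta> c C d  means that some typing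
derivation of  \<Gamma> |- c : C  has denotation  d  at the environment \<eta>.\<close>

inductive semv :: "'u model \<Rightarrow> logic \<Rightarrow> ctx \<Rightarrow> (vname \<Rightarrow> 'u) \<Rightarrow> val \<Rightarrow> vtype \<Rightarrow> 'u \<Rightarrow> bool"
and semc :: "'u model \<Rightarrow> logic \<Rightarrow> ctx \<Rightarrow> (vname \<Rightarrow> 'u) \<Rightarrow> comp \<Rightarrow> ctype \<Rightarrow> 'u \<Rightarrow> bool"
for M :: "'u model" and L :: logic where
  sem_var: "\<Gamma> x = Some A \<Longrightarrow> semv M L \<Gamma> \<eta> (Var x) A (\<eta> x)"
| sem_unit: "semv M L \<Gamma> \<eta> UnitV TUnit (unitv M)"
| sem_true: "semv M L \<Gamma> \<eta> TrueV TBool (ttv M)"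
| sem_false: "semv M L \<Gamma> \<eta> FalseV TBool (ffv M)"
| sem_fun: "vtyp L \<Gamma> (Fun x c) (TArr A C) \<Longrightarrow>
    (\<forall>a \<in> vdom M A. semc M L (\<Gamma>(x \<mapsto> A)) (\<eta>(x := a)) c C (f a)) \<Longrightarrow>
    semv M L \<Gamma> \<eta> (Fun x c) (TArr A C) (lam M A C f)"
| sem_handler: "vtyp L \<Gamma> (Handler x cr h) (THnd (CTy A S E) D) \<Longrightarrow>
    (\<forall>a \<in> vdom M A. semc M L (\<Gamma>(x \<mapsto> A)) (\<eta>(x := a)) cr D (fr a)) \<Longrightarrow>
    (\<forall>op y k c Aop Bop. fmlookup h op = Some (y, k, c) \<longrightarrow> fmlookup S op = Some (Aop, Bop) \<longrightarrow>
       (\<forall>a \<in> vdom M Aop. \<forall>\<kappa>. maps_into \<kappa> (vdom M Bop) (cdom M D) \<longrightarrow>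
          semc M L (\<Gamma>(y \<mapsto> Aop, k \<mapsto> TArr Bop D)) (\<eta>(y := a, k := lam M Bop D \<kappa>)) c D
            (Hop op a \<kappa>))) \<Longrightarrow>
    (\<forall>t \<in> trees M A S. lift_rel M A S fr Hop t (F t)) \<Longrightarrow>
    semv M L \<Gamma> \<eta> (Handler x cr h) (THnd (CTy A S E) D) (hlam M (CTy A S E) D F)"
| sem_if_true: "ctyp L \<Gamma> (If v c1 c2) C \<Longrightarrow> semv M L \<Gamma> \<eta> v TBool (ttv M) \<Longrightarrow>
    semc M L \<Gamma> \<eta> c1 C d \<Longrightarrow> semc M L \<Gamma> \<eta> (If v c1 c2) C d"
| sem_if_false: "ctyp L \<Gamma> (If v c1 c2) C \<Longrightarrow> semv M L \<Gamma> \<eta> v TBool (ffv M) \<Longrightarrow>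
    semc M L \<Gamma> \<eta> c2 C d \<Longrightarrow> semc M L \<Gamma> \<eta> (If v c1 c2) C d"
| sem_app: "semv M L \<Gamma> \<eta> v1 (TArr A C) f \<Longrightarrow> semv M L \<Gamma> \<eta> v2 A a \<Longrightarrow>
    semc M L \<Gamma> \<eta> (App v1 v2) C (app M f a)"
| sem_return: "semv M L \<Gamma> \<eta> v A a \<Longrightarrow> semc M L \<Gamma> \<eta> (Return v) (CTy A S E) (ret M A S a)"
| sem_op: "ctyp L \<Gamma> (Op op v y c) (CTy A S E) \<Longrightarrow> fmlookup S op = Some (Aop, Bop) \<Longrightarrow>
    semv M L \<Gamma> \<eta> v Aop a \<Longrightarrow>
    (\<forall>b \<in> vdom M Bop. semc M L (\<Gamma>(y \<mapsto> Bop)) (\<eta>(y := b)) c (CTy A S E) (\<kappa> b)) \<Longrightarrow>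
    semc M L \<Gamma> \<eta> (Op op v y c) (CTy A S E) (node M A S op a \<kappa>)"
| sem_do: "ctyp L \<Gamma> (Do x c1 c2) (CTy B S E) \<Longrightarrow> semc M L \<Gamma> \<eta> c1 (CTy A S E) t \<Longrightarrow>
    (\<forall>a \<in> vdom M A. semc M L (\<Gamma>(x \<mapsto> A)) (\<eta>(x := a)) c2 (CTy B S E) (f a)) \<Longrightarrow>
    lift_rel M A S f (node M B S) t d \<Longrightarrow>
    semc M L \<Gamma> \<eta> (Do x c1 c2) (CTy B S E) d"
| sem_with: "semv M L \<Gamma> \<eta> v (THnd C D) hv \<Longrightarrow> semc M L \<Gamma> \<eta> c C t \<Longrightarrow>
    semc M L \<Gamma> \<eta> (With v c) D (app M hv t)"

end

theory Submission
  imports Defs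
begin

lemma subst_h_handler: "subst_v (Handler y cr h) x w =
   Handler y (if y = x then cr else subst_c cr x w) (subst_h h x w)"
  by (simp add: subst_h_def fmap.map_comp comp_def case_prod_unfold)

lemma fmlookup_subst_h: "fmlookup (subst_h h x w) op =
   map_option (\<lambda>(y', k, c). (y', k, subst_c c x (if y' = x \<or> k = x then Var x else w))) (fmlookup h op)"
  by (simp add: subst_h_def)

lemma subst_id: "subst_v v x (Var x) = v" "subst_c c x (Var x) = c"
proof (induction v and c)
  case (Handler y cr h)
  have "subst_h h x (Var x) = h"
  proof (rule fmap_ext)
    fix op
    show "fmlookup (subst_h h x (Var x)) op = fmlookup h op"
    proof (cases "fmlookup h op")
      case (Some t)
      obtain a b c where t: "t = (a, b, c)" by (cases t) auto
      have "t \<in> fmran' h" using Some by (rule fmran'I)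
      then have "subst_c c x (Var x) = c" using Handler.IH(2)[of t "(b,c)" c] t by auto
      then show ?thesis using Some t by (simp add: fmlookup_subst_h)
    qed (simp add: fmlookup_subst_h)
  qed
  then show ?case using Handler.IH(1) by (simp only: subst_h_handler) simp
qed auto

lemma RL_clauses: "reasoning_logic L \<Longrightarrow> L \<Gamma> h E S D \<Longrightarrow> clauses_typ L \<Gamma> h S D"
  unfolding reasoning_logic_def by blast
lemma RL_weak: "reasoning_logic L \<Longrightarrow> L \<Gamma> h E S D \<Longrightarrow> \<Gamma> \<subseteq>\<^sub>m \<Gamma>' \<Longrightarrow> L \<Gamma>' h E S D"
  unfolding reasoning_logic_def by blast
lemma RL_subst: "reasoning_logic L \<Longrightarrow> L (\<Gamma>(x \<mapsto> A)) h E S D \<Longrightarrow> vtyp L Map.empty w A \<Longrightarrow>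
   L \<Gamma> (subst_h h x w) E S D"
  unfolding reasoning_logic_def by blast

lemma typ_weaken:
  assumes RL: "reasoning_logic L"
  shows "vtyp L \<Gamma> v A \<Longrightarrow> \<Gamma> \<subseteq>\<^sub>m \<Gamma>' \<Longrightarrow> vtyp L \<Gamma>' v A"
    and "ctyp L \<Gamma> c C \<Longrightarrow> \<Gamma> \<subseteq>\<^sub>m \<Gamma>' \<Longrightarrow> ctyp L \<Gamma>' c C"
proof (induction arbitrary: \<Gamma>' and \<Gamma>' rule: vtyp_ctyp.inducts)
  case (ty_var \<Gamma> x A)
  then show ?case by (auto simp: map_le_def dom_def intro!: vtyp_ctyp.ty_var)
next
  case (ty_handler \<Gamma> x A cr D h E S)
  then show ?case by (meson vtyp_ctyp.ty_handler RL_weak[OF RL] map_le_upd)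
qed (meson vtyp_ctyp.intros map_le_upd)+

lemma vtyp_closed: "reasoning_logic L \<Longrightarrow> vtyp L Map.empty w A \<Longrightarrow> vtyp L \<Gamma> w A"
  by (metis typ_weaken(1) map_le_empty)

lemma upd_same: "(\<Gamma>(x \<mapsto> A))(x \<mapsto> B) = \<Gamma>(x \<mapsto> B)" by simp
lemma upd_twist: "y \<noteq> x \<Longrightarrow> (\<Gamma>(x \<mapsto> A))(y \<mapsto> B) = (\<Gamma>(y \<mapsto> B))(x \<mapsto> A)"
  by (rule fun_upd_twist) auto

lemma typ_subst:
  assumes RL: "reasoning_logic L" and W: "vtyp L Map.empty w A"
  shows "vtyp L \<Gamma>' v B \<Longrightarrow> \<Gamma>' = \<Gamma>(x \<mapsto> A) \<Longrightarrow> vtyp L \<Gamma> (subst_v v x w) B"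
    and "ctyp L \<Gamma>' c C \<Longrightarrow> \<Gamma>' = \<Gamma>(x \<mapsto> A) \<Longrightarrow> ctyp L \<Gamma> (subst_c c x w) C"
proof (induction arbitrary: \<Gamma> and \<Gamma> rule: vtyp_ctyp.inducts)
  case (ty_var \<Gamma>0 y B)
  then show ?case using vtyp_closed[OF RL W] by (auto intro: vtyp_ctyp.ty_var)
next
  case (ty_fun \<Gamma>0 y B c C)
  show ?case
  proof (cases "y = x")
    case True
    have "ctyp L (\<Gamma>(y \<mapsto> B)) c C" using ty_fun(1) unfolding ty_fun(3) True upd_same .
    then show ?thesis using True by (simp add: vtyp_ctyp.ty_fun)
  next
    case False
    have "ctyp L (\<Gamma>(y \<mapsto> B)) (subst_c c x w) C"
      by (rule ty_fun(2)) (unfold ty_fun(3), rule upd_twist[OF False])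
    then show ?thesis using False by (simp add: vtyp_ctyp.ty_fun)
  qed
next
  case (ty_handler \<Gamma>0 y B cr D h E S)
  have L: "L \<Gamma> (subst_h h x w) E S D" using ty_handler(3) unfolding ty_handler(4) by (rule RL_subst[OF RL _ W])
  show ?case
  proof (cases "y = x")
    case True
    have "ctyp L (\<Gamma>(y \<mapsto> B)) cr D" using ty_handler(1) unfolding ty_handler(4) True upd_same .
    then show ?thesis using True L by (simp only: subst_h_handler) (simp add: vtyp_ctyp.ty_handler)
  next
    case False
    have "ctyp L (\<Gamma>(y \<mapsto> B)) (subst_c cr x w) D"
      by (rule ty_handler(2)) (unfold ty_handler(4), rule upd_twist[OF False])
    then show ?thesis using False L by (simp only: subst_h_handler) (simp add: vtyp_ctyp.ty_handler)
  qed
next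
  case (ty_op S op Aop Bop \<Gamma>0 v y c A' E)
  have v: "vtyp L \<Gamma> (subst_v v x w) Aop" using ty_op by simp
  show ?case
  proof (cases "y = x")
    case True
    have "ctyp L (\<Gamma>(y \<mapsto> Bop)) c (CTy A' S E)" using ty_op(4) unfolding ty_op(6) True upd_same .
    then show ?thesis using True v ty_op(1) by (simp add: vtyp_ctyp.ty_op)
  next
    case False
    have "ctyp L (\<Gamma>(y \<mapsto> Bop)) (subst_c c x w) (CTy A' S E)"
      by (rule ty_op(5)) (unfold ty_op(6), rule upd_twist[OF False])
    then show ?thesis using False v ty_op(1) by (simp add: vtyp_ctyp.ty_op)
  qed
next
  case (ty_do \<Gamma>0 c1 A' S E y c2 B)
  have c1: "ctyp L \<Gamma> (subst_c c1 x w) (CTy A' S E)" using ty_do by simp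
  show ?case
  proof (cases "y = x")
    case True
    have "ctyp L (\<Gamma>(y \<mapsto> A')) c2 (CTy B S E)" using ty_do(3) unfolding ty_do(5) True upd_same .
    then show ?thesis using True c1 by (simp add: vtyp_ctyp.ty_do)
  next
    case False
    have "ctyp L (\<Gamma>(y \<mapsto> A')) (subst_c c2 x w) (CTy B S E)"
      by (rule ty_do(4)) (unfold ty_do(5), rule upd_twist[OF False])
    then show ?thesis using False c1 by (simp add: vtyp_ctyp.ty_do)
  qed
qed (auto intro: vtyp_ctyp.ty_if vtyp_ctyp.ty_app vtyp_ctyp.ty_return vtyp_ctyp.ty_with vtyp_ctyp.ty_unit vtyp_ctyp.ty_true vtyp_ctyp.ty_false)

context
  fixes M :: "'u model"
  assumes SM: "standard_model M"
begin

lemmas SMF = SM[unfolded standard_model_def]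
lemmas sm4 = SMF[THEN conjunct2, THEN conjunct2, THEN conjunct2, THEN conjunct1]
lemmas sm5 = SMF[THEN conjunct2, THEN conjunct2, THEN conjunct2, THEN conjunct2, THEN conjunct1]
lemmas sm6 = SMF[THEN conjunct2, THEN conjunct2, THEN conjunct2, THEN conjunct2, THEN conjunct2]

lemma sm_unit: "vdom M TUnit = {unitv M}" by (rule SMF[THEN conjunct1])
lemma sm_bool: "vdom M TBool = {ttv M, ffv M}" by (rule SMF[THEN conjunct2, THEN conjunct1])
lemma sm_tf: "ttv M \<noteq> ffv M" by (rule SMF[THEN conjunct2, THEN conjunct2, THEN conjunct1])
lemma sm_arr: "vdom M (TArr A C) = {lam M A C f | f. maps_into f (vdom M A) (cdom M C)}"
  by (rule sm4[THEN spec, THEN spec, THEN conjunct1])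
lemma sm_arr_beta: "maps_into f (vdom M A) (cdom M C) \<Longrightarrow> a \<in> vdom M A \<Longrightarrow> app M (lam M A C f) a = f a"
  by (rule sm4[THEN spec, THEN spec, THEN conjunct2, THEN conjunct1, rule_format]) assumption+
lemma sm_hnd: "vdom M (THnd C D) = {hlam M C D f | f. maps_into f (cdom M C) (cdom M D)}"
  by (rule sm5[THEN spec, THEN spec, THEN conjunct1])
lemma sm_hnd_beta: "maps_into f (cdom M C) (cdom M D) \<Longrightarrow> t \<in> cdom M C \<Longrightarrow> app M (hlam M C D f) t = f t"
  by (rule sm5[THEN spec, THEN spec, THEN conjunct2, THEN conjunct1, rule_format]) assumption+
lemma sm_ret_inj: "a \<in> vdom M A \<Longrightarrow> a' \<in> vdom M A \<Longrightarrow> ret M A S a = ret M A S a' \<Longrightarrow> a = a'"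
  by (rule sm6[THEN spec, THEN spec, THEN conjunct1, rule_format]) assumption+
lemma sm_node_inj: "fmlookup S op = Some (Aop, Bop) \<Longrightarrow> a \<in> vdom M Aop \<Longrightarrow>
              maps_into \<kappa> (vdom M Bop) (trees M A S) \<Longrightarrow>
              fmlookup S op' = Some (Aop', Bop') \<Longrightarrow> a' \<in> vdom M Aop' \<Longrightarrow>
              maps_into \<kappa>' (vdom M Bop') (trees M A S) \<Longrightarrow>
              node M A S op a \<kappa> = node M A S op' a' \<kappa>' \<Longrightarrow>
                 op = op' \<and> a = a' \<and> (\<forall>b \<in> vdom M Bop. \<kappa> b = \<kappa>' b)"
  by (subst (asm) sm6[THEN spec, THEN spec, THEN conjunct2, THEN conjunct1, rule_format]) assumption+
lemma sm_ret_node: "a \<in> vdom M A \<Longrightarrow>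
              fmlookup S op = Some (Aop, Bop) \<Longrightarrow> a' \<in> vdom M Aop \<Longrightarrow>
              maps_into \<kappa> (vdom M Bop) (trees M A S) \<Longrightarrow>
              ret M A S a \<noteq> node M A S op a' \<kappa>"
  by (rule sm6[THEN spec, THEN spec, THEN conjunct2, THEN conjunct2, rule_format]) assumption+

lemma lift_into:
  assumes "lift_rel M A S f H t d"
    and "\<forall>a \<in> vdom M A. f a \<in> Y"
    and "\<forall>op Aop Bop a \<kappa>. fmlookup S op = Some (Aop, Bop) \<longrightarrow> a \<in> vdom M Aop \<longrightarrow>
           maps_into \<kappa> (vdom M Bop) Y \<longrightarrow> H op a \<kappa> \<in> Y"
  shows "d \<in> Y"
  using assms(1)
proof induction
  case (lift_ret a) then show ?case using assms(2) by blast
next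
  case (lift_node op Aop Bop a \<kappa> \<kappa>')
  have "maps_into (\<lambda>b. if b \<in> vdom M Bop then \<kappa>' b else undefined) (vdom M Bop) Y"
    using lift_node(4) by (simp add: maps_into_def)
  then show ?case using assms(3) lift_node(1,2) by blast
qed

lemma lift_fun:
  assumes "lift_rel M A S f H t d1"
  shows "lift_rel M A S f H t d2 \<Longrightarrow> d1 = d2"
  using assms
proof (induction arbitrary: d2)
  case (lift_ret a)
  from lift_ret.prems show ?case
  proof cases
    case (lift_ret a')
    then show ?thesis using sm_ret_inj[of a A a' S] \<open>a \<in> vdom M A\<close> by simp
  next
    case (lift_node op Aop Bop a' \<kappa> \<kappa>')
    then show ?thesis using sm_ret_node[of a A S op Aop Bop a' \<kappa>] \<open>a \<in> vdom M A\<close>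
      by (auto simp: maps_into_def)
  qed
next
  case (lift_node op Aop Bop a \<kappa> \<kappa>')
  note outer = lift_node
  from lift_node.prems show ?case
  proof cases
    case (lift_ret a')
    then show ?thesis using sm_ret_node[of a' A S op Aop Bop a \<kappa>] outer(1-3)
      by (auto simp: maps_into_def)
  next
    case (lift_node op' Aop' Bop' a' \<kappa>2 \<kappa>2')
    have eq: "op = op' \<and> a = a' \<and> (\<forall>b \<in> vdom M Bop. \<kappa> b = \<kappa>2 b)"
      apply (rule sm_node_inj[of S op Aop Bop a \<kappa> A op' Aop' Bop' a' \<kappa>2])
      using lift_node outer by (auto simp: maps_into_def)
    then have same: "Aop' = Aop" "Bop' = Bop" using lift_node outer by auto
    have "\<forall>b \<in> vdom M Bop. \<kappa>' b = \<kappa>2' b"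
      using eq outer(4) lift_node(6) same by auto
    then have "(\<lambda>b. if b \<in> vdom M Bop then \<kappa>' b else undefined) =
               (\<lambda>b. if b \<in> vdom M Bop' then \<kappa>2' b else undefined)" using same by auto
    then show ?thesis using lift_node(2) eq by simp
  qed
qed

end

lemma sem_typ: "semv M L \<Gamma> \<eta> v A a \<Longrightarrow> vtyp L \<Gamma> v A" "semc M L \<Gamma> \<eta> c C d \<Longrightarrow> ctyp L \<Gamma> c C"
  by (induction rule: semv_semc.inducts)
     (auto intro: vtyp_ctyp.ty_var vtyp_ctyp.ty_unit vtyp_ctyp.ty_true vtyp_ctyp.ty_false
        vtyp_ctyp.ty_app vtyp_ctyp.ty_return vtyp_ctyp.ty_with)

definition envok :: "'u model \<Rightarrow> ctx \<Rightarrow> (vname \<Rightarrow> 'u) \<Rightarrow> bool" where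
  "envok M \<Gamma> \<eta> \<longleftrightarrow> (\<forall>x B. \<Gamma> x = Some B \<longrightarrow> \<eta> x \<in> vdom M B)"

lemma envok_upd: "envok M \<Gamma> \<eta> \<Longrightarrow> a \<in> vdom M A \<Longrightarrow> envok M (\<Gamma>(x \<mapsto> A)) (\<eta>(x := a))"
  by (auto simp: envok_def)

lemma envok_empty: "envok M Map.empty \<eta>" by (simp add: envok_def)

lemma handler_doms:
  assumes RL: "reasoning_logic L" and "vtyp L \<Gamma> (Handler x cr h) (THnd (CTy A S E) D)"
  shows "fmdom h = fmdom S"
  using assms(2) by cases (use RL_clauses[OF RL] in \<open>auto simp: clauses_typ_def\<close>)

context
  fixes M :: "'u model"
  assumes SM: "standard_model M"
begin

lemma handler_maps:
  assumes "fmdom h = fmdom S" "\<forall>a\<in>vdom M A. fr a \<in> cdom M D"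
   "\<forall>op y k c Aop Bop. fmlookup h op = Some (y,k,c) \<longrightarrow> fmlookup S op = Some (Aop,Bop) \<longrightarrow>
      (\<forall>a\<in>vdom M Aop. \<forall>\<kappa>. maps_into \<kappa> (vdom M Bop) (cdom M D) \<longrightarrow> Hop op a \<kappa> \<in> cdom M D)"
   "\<forall>t\<in>trees M A S. lift_rel M A S fr Hop t (F t)"
  shows "maps_into F (trees M A S) (cdom M D)"
  unfolding maps_into_def
proof
  fix t assume "t \<in> trees M A S"
  then have "lift_rel M A S fr Hop t (F t)" using assms(4) by blast
  then show "F t \<in> cdom M D"
  proof (rule lift_into[OF SM])
    show "\<forall>a\<in>vdom M A. fr a \<in> cdom M D" by fact
    show "\<forall>op Aop Bop a \<kappa>. fmlookup S op = Some (Aop, Bop) \<longrightarrow> a \<in> vdom M Aop \<longrightarrow>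
           maps_into \<kappa> (vdom M Bop) (cdom M D) \<longrightarrow> Hop op a \<kappa> \<in> cdom M D"
    proof (intro allI impI)
      fix op Aop Bop a \<kappa>
      assume 1: "fmlookup S op = Some (Aop, Bop)" "a \<in> vdom M Aop" "maps_into \<kappa> (vdom M Bop) (cdom M D)"
      then have "op |\<in>| fmdom h" using assms(1) by (simp add: fmlookup_dom_iff)
      then obtain y k c where "fmlookup h op = Some (y, k, c)" by (auto simp: fmlookup_dom_iff)
      then show "Hop op a \<kappa> \<in> cdom M D" using assms(3) 1 by blast
    qed
  qed
qed

lemma lam_in: "maps_into \<kappa> (vdom M B) (cdom M D) \<Longrightarrow> lam M B D \<kappa> \<in> vdom M (TArr B D)"
  using sm_arr[OF SM] by blast

lemma sound:
  assumes RL: "reasoning_logic L"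
  shows "semv M L \<Gamma> \<eta> v A a \<Longrightarrow> envok M \<Gamma> \<eta> \<Longrightarrow> a \<in> vdom M A"
    and "semc M L \<Gamma> \<eta> c C d \<Longrightarrow> envok M \<Gamma> \<eta> \<Longrightarrow> d \<in> cdom M C"
proof (induction rule: semv_semc.inducts)
  case (sem_var \<Gamma> x A \<eta>)
  then show ?case by (simp add: envok_def)
next
  case (sem_unit \<Gamma> \<eta>)
  then show ?case by (simp add: sm_unit[OF SM])
next
  case (sem_true \<Gamma> \<eta>)
  then show ?case by (simp add: sm_bool[OF SM])
next
  case (sem_false \<Gamma> \<eta>)
  then show ?case by (simp add: sm_bool[OF SM])
next
  case (sem_fun \<Gamma> x c A C \<eta> f)
  have "maps_into f (vdom M A) (cdom M C)"
    using sem_fun(2) envok_upd[OF sem_fun(3)] unfolding maps_into_def by blast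
  then show ?case using sm_arr[OF SM] by blast
next
  case (sem_handler \<Gamma> x cr h A S E D \<eta> fr Hop F)
  have "maps_into F (trees M A S) (cdom M D)"
  proof (rule handler_maps)
    show "fmdom h = fmdom S" using handler_doms[OF RL sem_handler(1)] .
    show "\<forall>a\<in>vdom M A. fr a \<in> cdom M D" using sem_handler(2) envok_upd[OF sem_handler(5)] by blast
    show "\<forall>t\<in>trees M A S. lift_rel M A S fr Hop t (F t)" by fact
    show "\<forall>op y k c Aop Bop. fmlookup h op = Some (y,k,c) \<longrightarrow> fmlookup S op = Some (Aop,Bop) \<longrightarrow>
      (\<forall>a\<in>vdom M Aop. \<forall>\<kappa>. maps_into \<kappa> (vdom M Bop) (cdom M D) \<longrightarrow> Hop op a \<kappa> \<in> cdom M D)"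
    proof (intro allI impI ballI)
      fix op y k c Aop Bop a \<kappa>
      assume h: "fmlookup h op = Some (y,k,c)" and S: "fmlookup S op = Some (Aop,Bop)"
        and a: "a \<in> vdom M Aop" and m: "maps_into \<kappa> (vdom M Bop) (cdom M D)"
      have "envok M (\<Gamma>(y\<mapsto>Aop, k\<mapsto>TArr Bop D)) (\<eta>(y:=a, k:=lam M Bop D \<kappa>))"
        using envok_upd[OF envok_upd[OF sem_handler(5) a] lam_in[OF m]] .
      then show "Hop op a \<kappa> \<in> cdom M D" using sem_handler(3) h S a m by blast
    qed
  qed
  then show ?case using sm_hnd[OF SM] by auto
next
  case (sem_if_true \<Gamma> v c1 c2 C \<eta> d)
  then show ?case by blast
next
  case (sem_if_false \<Gamma> v c1 c2 C \<eta> d)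
  then show ?case by blast
next
  case (sem_app \<Gamma> \<eta> v1 A C f v2 a)
  then obtain g where "f = lam M A C g" "maps_into g (vdom M A) (cdom M C)"
    using sm_arr[OF SM] by blast
  then show ?case using sm_arr_beta[OF SM] sem_app by (auto simp: maps_into_def)
next
  case (sem_return \<Gamma> \<eta> v A a S E)
  then show ?case by (auto intro: trees.tr_ret)
next
  case (sem_op \<Gamma> op v y c A S E Aop Bop \<eta> a \<kappa>)
  have "\<forall>b\<in>vdom M Bop. \<kappa> b \<in> trees M A S" using sem_op envok_upd by fastforce
  then show ?case using sem_op by (auto intro: trees.tr_node)
next
  case (sem_do \<Gamma> x c1 c2 B S E \<eta> A t f d)
  show ?case
  proof (simp, rule lift_into[OF SM sem_do(5)])
    show "\<forall>a\<in>vdom M A. f a \<in> trees M B S" using sem_do envok_upd by fastforce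
    show "\<forall>op Aop Bop a \<kappa>. fmlookup S op = Some (Aop, Bop) \<longrightarrow> a \<in> vdom M Aop \<longrightarrow>
           maps_into \<kappa> (vdom M Bop) (trees M B S) \<longrightarrow> node M B S op a \<kappa> \<in> trees M B S"
      by (auto simp: maps_into_def intro: trees.tr_node)
  qed
next
  case (sem_with \<Gamma> \<eta> v C D hv c t)
  then obtain g where "hv = hlam M C D g" "maps_into g (cdom M C) (cdom M D)"
    using sm_hnd[OF SM] by blast
  then show ?case using sm_hnd_beta[OF SM] sem_with by (auto simp: maps_into_def)
qed

end

lemma sem_weaken:
  assumes RL: "reasoning_logic L"
  shows "semv M L \<Gamma> \<eta> v A a \<Longrightarrow> \<Gamma> \<subseteq>\<^sub>m \<Gamma>' \<Longrightarrow> (\<forall>z\<in>dom \<Gamma>. \<eta>' z = \<eta> z) \<Longrightarrow> semv M L \<Gamma>' \<eta>' v A a"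
    and "semc M L \<Gamma> \<eta> c C d \<Longrightarrow> \<Gamma> \<subseteq>\<^sub>m \<Gamma>' \<Longrightarrow> (\<forall>z\<in>dom \<Gamma>. \<eta>' z = \<eta> z) \<Longrightarrow> semc M L \<Gamma>' \<eta>' c C d"
proof (induction arbitrary: \<Gamma>' \<eta>' and \<Gamma>' \<eta>' rule: semv_semc.inducts)
  case (sem_var \<Gamma> x A \<eta>)
  have "\<Gamma>' x = Some A" using sem_var by (auto simp: map_le_def dom_def)
  then have "semv M L \<Gamma>' \<eta>' (Var x) A (\<eta>' x)" by (rule semv_semc.sem_var)
  then show ?case using sem_var by (auto simp: dom_def)
next
  case (sem_unit \<Gamma> \<eta>) show ?case by (rule semv_semc.sem_unit)
next
  case (sem_true \<Gamma> \<eta>) show ?case by (rule semv_semc.sem_true)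
next
  case (sem_false \<Gamma> \<eta>) show ?case by (rule semv_semc.sem_false)
next
  case (sem_fun \<Gamma> x c A C \<eta> f)
  show ?case
  proof (rule semv_semc.sem_fun)
    show "vtyp L \<Gamma>' (Fun x c) (TArr A C)" using typ_weaken(1)[OF RL sem_fun(1,3)] .
    show "\<forall>a\<in>vdom M A. semc M L (\<Gamma>'(x \<mapsto> A)) (\<eta>'(x := a)) c C (f a)"
    proof
      fix a assume a: "a \<in> vdom M A"
      have le: "\<Gamma>(x \<mapsto> A) \<subseteq>\<^sub>m \<Gamma>'(x \<mapsto> A)" using sem_fun(3) by (rule map_le_upd)
      have ag: "\<forall>z\<in>dom (\<Gamma>(x \<mapsto> A)). (\<eta>'(x := a)) z = (\<eta>(x := a)) z" using sem_fun(4) by auto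
      show "semc M L (\<Gamma>'(x \<mapsto> A)) (\<eta>'(x := a)) c C (f a)" using sem_fun(2) a le ag by blast
    qed
  qed
next
  case (sem_handler \<Gamma> x cr h A S E D \<eta> fr Hop F)
  show ?case
  proof (rule semv_semc.sem_handler)
    show "vtyp L \<Gamma>' (Handler x cr h) (THnd (CTy A S E) D)" using typ_weaken(1)[OF RL sem_handler(1,5)] .
    show "\<forall>a\<in>vdom M A. semc M L (\<Gamma>'(x \<mapsto> A)) (\<eta>'(x := a)) cr D (fr a)"
    proof
      fix a assume a: "a \<in> vdom M A"
      have le: "\<Gamma>(x \<mapsto> A) \<subseteq>\<^sub>m \<Gamma>'(x \<mapsto> A)" using sem_handler(5) by (rule map_le_upd)
      have ag: "\<forall>z\<in>dom (\<Gamma>(x \<mapsto> A)). (\<eta>'(x := a)) z = (\<eta>(x := a)) z" using sem_handler(6) by auto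
      show "semc M L (\<Gamma>'(x \<mapsto> A)) (\<eta>'(x := a)) cr D (fr a)" using sem_handler(2) a le ag by blast
    qed
    show "\<forall>op y k c Aop Bop. fmlookup h op = Some (y, k, c) \<longrightarrow> fmlookup S op = Some (Aop, Bop) \<longrightarrow>
       (\<forall>a \<in> vdom M Aop. \<forall>\<kappa>. maps_into \<kappa> (vdom M Bop) (cdom M D) \<longrightarrow>
          semc M L (\<Gamma>'(y \<mapsto> Aop, k \<mapsto> TArr Bop D)) (\<eta>'(y := a, k := lam M Bop D \<kappa>)) c D
            (Hop op a \<kappa>))"
    proof (intro allI impI ballI)
      fix op y k c Aop Bop a \<kappa>
      assume h: "fmlookup h op = Some (y,k,c)" and S: "fmlookup S op = Some (Aop,Bop)"
        and a: "a \<in> vdom M Aop" and m: "maps_into \<kappa> (vdom M Bop) (cdom M D)"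
      have le: "\<Gamma>(y \<mapsto> Aop, k \<mapsto> TArr Bop D) \<subseteq>\<^sub>m \<Gamma>'(y \<mapsto> Aop, k \<mapsto> TArr Bop D)"
        using sem_handler(5) by (intro map_le_upd)
      have ag: "\<forall>z\<in>dom (\<Gamma>(y \<mapsto> Aop, k \<mapsto> TArr Bop D)). (\<eta>'(y := a, k := lam M Bop D \<kappa>)) z = (\<eta>(y := a, k := lam M Bop D \<kappa>)) z"
        using sem_handler(6) by auto
      show "semc M L (\<Gamma>'(y \<mapsto> Aop, k \<mapsto> TArr Bop D)) (\<eta>'(y := a, k := lam M Bop D \<kappa>)) c D (Hop op a \<kappa>)"
        using sem_handler(3) h S a m le ag by blast
    qed
    show "\<forall>t\<in>trees M A S. lift_rel M A S fr Hop t (F t)" by fact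
  qed
next
  case (sem_if_true \<Gamma> v c1 c2 C \<eta> d)
  show ?case
    by (rule semv_semc.sem_if_true[OF typ_weaken(2)[OF RL sem_if_true(1,6)]])
       (use sem_if_true in blast)+
next
  case (sem_if_false \<Gamma> v c1 c2 C \<eta> d)
  show ?case
    by (rule semv_semc.sem_if_false[OF typ_weaken(2)[OF RL sem_if_false(1,6)]])
       (use sem_if_false in blast)+
next
  case (sem_app \<Gamma> \<eta> v1 A C f v2 a)
  then show ?case by (blast intro: semv_semc.sem_app)
next
  case (sem_return \<Gamma> \<eta> v A a S E)
  then show ?case by (blast intro: semv_semc.sem_return)
next
  case (sem_op \<Gamma> op v y c A S E Aop Bop \<eta> a \<kappa>)
  show ?case
  proof (rule semv_semc.sem_op[OF typ_weaken(2)[OF RL sem_op(1) sem_op.prems(1)] \<open>fmlookup S op = Some (Aop, Bop)\<close>])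
    show "semv M L \<Gamma>' \<eta>' v Aop a" using sem_op by blast
    show "\<forall>b\<in>vdom M Bop. semc M L (\<Gamma>'(y \<mapsto> Bop)) (\<eta>'(y := b)) c (CTy A S E) (\<kappa> b)"
    proof
      fix b assume b: "b \<in> vdom M Bop"
      have le: "\<Gamma>(y \<mapsto> Bop) \<subseteq>\<^sub>m \<Gamma>'(y \<mapsto> Bop)" using sem_op.prems(1) by (rule map_le_upd)
      have ag: "\<forall>z\<in>dom (\<Gamma>(y \<mapsto> Bop)). (\<eta>'(y := b)) z = (\<eta>(y := b)) z" using sem_op.prems(2) by auto
      show "semc M L (\<Gamma>'(y \<mapsto> Bop)) (\<eta>'(y := b)) c (CTy A S E) (\<kappa> b)" using sem_op b le ag by blast
    qed
  qed
next
  case (sem_do \<Gamma> x c1 c2 B S E \<eta> A t f d)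
  show ?case
  proof (rule semv_semc.sem_do[OF typ_weaken(2)[OF RL sem_do(1,6)]])
    show "semc M L \<Gamma>' \<eta>' c1 (CTy A S E) t" using sem_do by blast
    show "\<forall>a\<in>vdom M A. semc M L (\<Gamma>'(x \<mapsto> A)) (\<eta>'(x := a)) c2 (CTy B S E) (f a)"
    proof
      fix a assume a: "a \<in> vdom M A"
      have le: "\<Gamma>(x \<mapsto> A) \<subseteq>\<^sub>m \<Gamma>'(x \<mapsto> A)" using sem_do(6) by (rule map_le_upd)
      have ag: "\<forall>z\<in>dom (\<Gamma>(x \<mapsto> A)). (\<eta>'(x := a)) z = (\<eta>(x := a)) z" using sem_do(7) by auto
      show "semc M L (\<Gamma>'(x \<mapsto> A)) (\<eta>'(x := a)) c2 (CTy B S E) (f a)" using sem_do(4) a le ag by blast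
    qed
    show "lift_rel M A S f (node M B S) t d" by fact
  qed
next
  case (sem_with \<Gamma> \<eta> v C D hv c t)
  then show ?case by (blast intro: semv_semc.sem_with)
qed

lemma sem_closed: "reasoning_logic L \<Longrightarrow> semv M L Map.empty \<eta>0 w A a \<Longrightarrow> semv M L \<Gamma> \<eta> w A a"
  by (erule sem_weaken(1)) auto

lemma upd2_absorb: "x = y \<or> x = k \<Longrightarrow> (f(x := u))(y := p, k := q) = f(y := p, k := q)"
  by (auto simp: fun_eq_iff)
lemma upd2_twist: "x \<noteq> y \<Longrightarrow> x \<noteq> k \<Longrightarrow> (f(x := u))(y := p, k := q) = (f(y := p, k := q))(x := u)"
  by (auto simp: fun_eq_iff)
lemma upd1_twist: "x \<noteq> y \<Longrightarrow> (f(x := u))(y := p) = (f(y := p))(x := u)"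
  by (auto simp: fun_eq_iff)

lemma sem_subst:
  assumes RL: "reasoning_logic L" and W: "semv M L Map.empty \<eta>w w A a"
  shows "semv M L \<Gamma>' \<eta>' v B b \<Longrightarrow> \<Gamma>' = \<Gamma>(x \<mapsto> A) \<Longrightarrow> \<eta>' = \<eta>(x := a) \<Longrightarrow> semv M L \<Gamma> \<eta> (subst_v v x w) B b"
    and "semc M L \<Gamma>' \<eta>' c C d \<Longrightarrow> \<Gamma>' = \<Gamma>(x \<mapsto> A) \<Longrightarrow> \<eta>' = \<eta>(x := a) \<Longrightarrow> semc M L \<Gamma> \<eta> (subst_c c x w) C d"
proof (induction arbitrary: \<Gamma> \<eta> and \<Gamma> \<eta> rule: semv_semc.inducts)
  case (sem_var \<Gamma>0 y B \<eta>0)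
  show ?case
  proof (cases "y = x")
    case True
    then have "B = A" "\<eta>0 y = a" using sem_var by auto
    then show ?thesis using True sem_closed[OF RL W] by simp
  next
    case False
    then have "\<Gamma> y = Some B" "\<eta>0 y = \<eta> y" using sem_var by auto
    then show ?thesis using False by (simp add: semv_semc.sem_var)
  qed
next
  case (sem_unit \<Gamma> \<eta>) show ?case by (simp add: semv_semc.sem_unit)
next
  case (sem_true \<Gamma> \<eta>) show ?case by (simp add: semv_semc.sem_true)
next
  case (sem_false \<Gamma> \<eta>) show ?case by (simp add: semv_semc.sem_false)
next
  case (sem_fun \<Gamma>0 y c A' C \<eta>0 f)
  have T: "vtyp L \<Gamma> (subst_v (Fun y c) x w) (TArr A' C)"
    using typ_subst(1)[OF RL sem_typ(1)[OF W] sem_fun(1) sem_fun.prems(1)] .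
  show ?case
  proof (cases "y = x")
    case True
    have "\<forall>a'\<in>vdom M A'. semc M L (\<Gamma>(y \<mapsto> A')) (\<eta>(y := a')) c C (f a')"
      using sem_fun(2) unfolding sem_fun.prems True fun_upd_upd by blast
    then show ?thesis using T True by (simp add: semv_semc.sem_fun)
  next
    case False
    have "\<forall>a'\<in>vdom M A'. semc M L (\<Gamma>(y \<mapsto> A')) (\<eta>(y := a')) (subst_c c x w) C (f a')"
    proof
      fix a' assume "a' \<in> vdom M A'"
      then have "\<And>G e. \<Gamma>0(y \<mapsto> A') = G(x \<mapsto> A) \<Longrightarrow> \<eta>0(y := a') = e(x := a) \<Longrightarrow>
          semc M L G e (subst_c c x w) C (f a')" using sem_fun(2) by blast
      then show "semc M L (\<Gamma>(y \<mapsto> A')) (\<eta>(y := a')) (subst_c c x w) C (f a')"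
        unfolding sem_fun.prems using upd1_twist[OF False[symmetric]] by metis
    qed
    then show ?thesis using T False by (simp add: semv_semc.sem_fun)
  qed
next
  case (sem_handler \<Gamma>0 y cr h A' S E D \<eta>0 fr Hop F)
  note hyps = sem_handler
  define cr' where "cr' = (if y = x then cr else subst_c cr x w)"
  have eq: "subst_v (Handler y cr h) x w = Handler y cr' (subst_h h x w)"
    unfolding cr'_def by (rule subst_h_handler)
  have T: "vtyp L \<Gamma> (Handler y cr' (subst_h h x w)) (THnd (CTy A' S E) D)"
    using typ_subst(1)[OF RL sem_typ(1)[OF W] sem_handler(1) sem_handler.prems(1)] unfolding eq .
  have CR: "\<forall>a'\<in>vdom M A'. semc M L (\<Gamma>(y \<mapsto> A')) (\<eta>(y := a')) cr' D (fr a')"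
  proof (cases "y = x")
    case True
    show ?thesis
      using sem_handler(2) unfolding sem_handler.prems True fun_upd_upd cr'_def by simp
  next
    case False
    show ?thesis
    proof
      fix a' assume "a' \<in> vdom M A'"
      then have "\<And>G e. \<Gamma>0(y \<mapsto> A') = G(x \<mapsto> A) \<Longrightarrow> \<eta>0(y := a') = e(x := a) \<Longrightarrow>
          semc M L G e (subst_c cr x w) D (fr a')" using sem_handler(2) by blast
      moreover have "\<Gamma>0(y \<mapsto> A') = (\<Gamma>(y \<mapsto> A'))(x \<mapsto> A)"
        unfolding sem_handler.prems by (rule upd1_twist) (use False in auto)
      moreover have "\<eta>0(y := a') = (\<eta>(y := a'))(x := a)"
        unfolding sem_handler.prems by (rule upd1_twist) (use False in auto)
      moreover have "cr' = subst_c cr x w" using False cr'_def by simp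
      ultimately show "semc M L (\<Gamma>(y \<mapsto> A')) (\<eta>(y := a')) cr' D (fr a')" by simp
    qed
  qed
  have CL: "\<forall>op y' k c' Aop Bop. fmlookup (subst_h h x w) op = Some (y', k, c') \<longrightarrow> fmlookup S op = Some (Aop, Bop) \<longrightarrow>
       (\<forall>a' \<in> vdom M Aop. \<forall>\<kappa>. maps_into \<kappa> (vdom M Bop) (cdom M D) \<longrightarrow>
          semc M L (\<Gamma>(y' \<mapsto> Aop, k \<mapsto> TArr Bop D)) (\<eta>(y' := a', k := lam M Bop D \<kappa>)) c' D
            (Hop op a' \<kappa>))"
  proof (intro allI impI ballI)
    fix op y' k c' Aop Bop a' \<kappa>
    assume h': "fmlookup (subst_h h x w) op = Some (y', k, c')" and S: "fmlookup S op = Some (Aop,Bop)"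
      and a': "a' \<in> vdom M Aop" and m: "maps_into \<kappa> (vdom M Bop) (cdom M D)"
    obtain c where h: "fmlookup h op = Some (y', k, c)"
      and c': "c' = subst_c c x (if y' = x \<or> k = x then Var x else w)"
      using h' by (auto simp: fmlookup_subst_h)
    show "semc M L (\<Gamma>(y' \<mapsto> Aop, k \<mapsto> TArr Bop D)) (\<eta>(y' := a', k := lam M Bop D \<kappa>)) c' D (Hop op a' \<kappa>)"
    proof (cases "x = y' \<or> x = k")
      case True
      then have "c' = c" using c' by (auto simp: subst_id)
      moreover have "semc M L (\<Gamma>0(y' \<mapsto> Aop, k \<mapsto> TArr Bop D)) (\<eta>0(y' := a', k := lam M Bop D \<kappa>)) c D (Hop op a' \<kappa>)"
        using sem_handler(3) h S a' m by blast
      ultimately show ?thesis unfolding sem_handler.prems upd2_absorb[OF True] by simp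
    next
      case False
      then have "c' = subst_c c x w" using c' by auto
      moreover have "\<And>G e. \<Gamma>0(y' \<mapsto> Aop, k \<mapsto> TArr Bop D) = G(x \<mapsto> A) \<Longrightarrow>
             \<eta>0(y' := a', k := lam M Bop D \<kappa>) = e(x := a) \<Longrightarrow>
          semc M L G e (subst_c c x w) D (Hop op a' \<kappa>)"
        using sem_handler(3) h S a' m by blast
      ultimately show ?thesis unfolding sem_handler.prems using False upd2_twist by metis
    qed
  qed
  show ?case unfolding eq
    by (rule semv_semc.sem_handler[OF T CR CL sem_handler(4)])
next
  case (sem_if_true \<Gamma>0 v c1 c2 C \<eta>0 d)
  have T: "ctyp L \<Gamma> (subst_c (If v c1 c2) x w) C"
    using typ_subst(2)[OF RL sem_typ(1)[OF W] sem_if_true(1) sem_if_true.prems(1)] .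
  have "semv M L \<Gamma> \<eta> (subst_v v x w) TBool (ttv M)" using sem_if_true by blast
  moreover have "semc M L \<Gamma> \<eta> (subst_c c1 x w) C d" using sem_if_true by blast
  ultimately show ?case using T by (simp add: semv_semc.sem_if_true)
next
  case (sem_if_false \<Gamma>0 v c1 c2 C \<eta>0 d)
  have T: "ctyp L \<Gamma> (subst_c (If v c1 c2) x w) C"
    using typ_subst(2)[OF RL sem_typ(1)[OF W] sem_if_false(1) sem_if_false.prems(1)] .
  have "semv M L \<Gamma> \<eta> (subst_v v x w) TBool (ffv M)" using sem_if_false by blast
  moreover have "semc M L \<Gamma> \<eta> (subst_c c2 x w) C d" using sem_if_false by blast
  ultimately show ?case using T by (simp add: semv_semc.sem_if_false)
next
  case (sem_app \<Gamma>0 \<eta>0 v1 A' C f v2 a')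
  have "semv M L \<Gamma> \<eta> (subst_v v1 x w) (TArr A' C) f" using sem_app by blast
  moreover have "semv M L \<Gamma> \<eta> (subst_v v2 x w) A' a'" using sem_app by blast
  ultimately show ?case by (simp add: semv_semc.sem_app)
next
  case (sem_return \<Gamma>0 \<eta>0 v A' a' S E)
  have "semv M L \<Gamma> \<eta> (subst_v v x w) A' a'" using sem_return by blast
  then show ?case by (simp add: semv_semc.sem_return)
next
  case (sem_op \<Gamma>0 op v y c A' S E Aop Bop \<eta>0 a' \<kappa>)
  have T: "ctyp L \<Gamma> (subst_c (Op op v y c) x w) (CTy A' S E)"
    using typ_subst(2)[OF RL sem_typ(1)[OF W] sem_op(1) sem_op.prems(1)] .
  have V: "semv M L \<Gamma> \<eta> (subst_v v x w) Aop a'" using sem_op by blast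
  have S: "fmlookup S op = Some (Aop, Bop)" by fact
  show ?case
  proof (cases "y = x")
    case True
    have "\<forall>b\<in>vdom M Bop. semc M L (\<Gamma>(y \<mapsto> Bop)) (\<eta>(y := b)) c (CTy A' S E) (\<kappa> b)"
      using sem_op unfolding sem_op.prems True fun_upd_upd by blast
    then show ?thesis using T V S True by (simp add: semv_semc.sem_op)
  next
    case False
    have "\<forall>b\<in>vdom M Bop. semc M L (\<Gamma>(y \<mapsto> Bop)) (\<eta>(y := b)) (subst_c c x w) (CTy A' S E) (\<kappa> b)"
    proof
      fix b assume "b \<in> vdom M Bop"
      then have "\<And>G e. \<Gamma>0(y \<mapsto> Bop) = G(x \<mapsto> A) \<Longrightarrow> \<eta>0(y := b) = e(x := a) \<Longrightarrow>
          semc M L G e (subst_c c x w) (CTy A' S E) (\<kappa> b)" using sem_op by blast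
      then show "semc M L (\<Gamma>(y \<mapsto> Bop)) (\<eta>(y := b)) (subst_c c x w) (CTy A' S E) (\<kappa> b)"
        unfolding sem_op.prems using upd1_twist[OF False[symmetric]] by metis
    qed
    then show ?thesis using T V S False by (simp add: semv_semc.sem_op)
  qed
next
  case (sem_do \<Gamma>0 y c1 c2 B S E \<eta>0 A' t f d)
  have T: "ctyp L \<Gamma> (subst_c (Do y c1 c2) x w) (CTy B S E)"
    using typ_subst(2)[OF RL sem_typ(1)[OF W] sem_do(1) sem_do.prems(1)] .
  have C1: "semc M L \<Gamma> \<eta> (subst_c c1 x w) (CTy A' S E) t" using sem_do by blast
  have LR: "lift_rel M A' S f (node M B S) t d" by fact
  show ?case
  proof (cases "y = x")
    case True
    have "\<forall>b\<in>vdom M A'. semc M L (\<Gamma>(y \<mapsto> A')) (\<eta>(y := b)) c2 (CTy B S E) (f b)"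
      using sem_do(4) unfolding sem_do.prems True fun_upd_upd by blast
    then show ?thesis using T C1 LR True by (simp add: semv_semc.sem_do)
  next
    case False
    have "\<forall>b\<in>vdom M A'. semc M L (\<Gamma>(y \<mapsto> A')) (\<eta>(y := b)) (subst_c c2 x w) (CTy B S E) (f b)"
    proof
      fix b assume "b \<in> vdom M A'"
      then have "\<And>G e. \<Gamma>0(y \<mapsto> A') = G(x \<mapsto> A) \<Longrightarrow> \<eta>0(y := b) = e(x := a) \<Longrightarrow>
          semc M L G e (subst_c c2 x w) (CTy B S E) (f b)" using sem_do(4) by blast
      then show "semc M L (\<Gamma>(y \<mapsto> A')) (\<eta>(y := b)) (subst_c c2 x w) (CTy B S E) (f b)"
        unfolding sem_do.prems using upd1_twist[OF False[symmetric]] by metis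
    qed
    then show ?thesis using T C1 LR False by (simp add: semv_semc.sem_do)
  qed
next
  case (sem_with \<Gamma>0 \<eta>0 v C D hv c t)
  have "semv M L \<Gamma> \<eta> (subst_v v x w) (THnd C D) hv" using sem_with by blast
  moreover have "semc M L \<Gamma> \<eta> (subst_c c x w) C t" using sem_with by blast
  ultimately show ?case by (simp add: semv_semc.sem_with)
qed

inductive_cases If_tE: "ctyp L \<Gamma> (If v c1 c2) C"
inductive_cases App_tE: "ctyp L \<Gamma> (App v1 v2) C"
inductive_cases Ret_tE: "ctyp L \<Gamma> (Return v) C"
inductive_cases Op_tE: "ctyp L \<Gamma> (Op op v y c) C"
inductive_cases Do_tE: "ctyp L \<Gamma> (Do x c1 c2) C"
inductive_cases With_tE: "ctyp L \<Gamma> (With v c) C"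
inductive_cases Fun_tE: "vtyp L \<Gamma> (Fun x c) T"
inductive_cases Hnd_tE: "vtyp L \<Gamma> (Handler x cr h) T"

lemma preserve_typ:
  assumes RL: "reasoning_logic L"
  shows "step c c' \<Longrightarrow> ctyp L Map.empty c C \<Longrightarrow> ctyp L Map.empty c' C"
proof (induction arbitrary: C rule: step.induct)
  case (step_if_true c1 c2)
  then show ?case by (auto elim: If_tE)
next
  case (step_if_false c1 c2)
  then show ?case by (auto elim: If_tE)
next
  case (step_beta x c v)
  from step_beta obtain A where F: "vtyp L Map.empty (Fun x c) (TArr A C)" and V: "vtyp L Map.empty v A"
    by (auto elim: App_tE)
  from F have "ctyp L (Map.empty(x \<mapsto> A)) c C" by (auto elim: Fun_tE)
  then show ?case by (rule typ_subst(2)[OF RL V]) simp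
next
  case (step_do c1 c1' x c2)
  from step_do.prems obtain A B S E where "C = CTy B S E" "ctyp L Map.empty c1 (CTy A S E)"
    "ctyp L (Map.empty(x \<mapsto> A)) c2 (CTy B S E)" by (auto elim: Do_tE)
  then show ?case using step_do.IH by (auto intro: vtyp_ctyp.ty_do)
next
  case (step_do_return x v c)
  from step_do_return obtain A B S E where "C = CTy B S E" "ctyp L Map.empty (Return v) (CTy A S E)"
    and c: "ctyp L (Map.empty(x \<mapsto> A)) c (CTy B S E)" by (auto elim: Do_tE)
  then have V: "vtyp L Map.empty v A" by (auto elim: Ret_tE)
  show ?case using typ_subst(2)[OF RL V c] \<open>C = _\<close> by simp
next
  case (step_do_op x op v y c1 c2)
  from step_do_op obtain A B S E where C: "C = CTy B S E" and o: "ctyp L Map.empty (Op op v y c1) (CTy A S E)"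
    and c2: "ctyp L (Map.empty(x \<mapsto> A)) c2 (CTy B S E)" by (auto elim: Do_tE)
  from o obtain Aop Bop where S: "fmlookup S op = Some (Aop, Bop)" and V: "vtyp L Map.empty v Aop"
    and c1: "ctyp L (Map.empty(y \<mapsto> Bop)) c1 (CTy A S E)" by (auto elim: Op_tE)
  have "ctyp L (Map.empty(y \<mapsto> Bop, x \<mapsto> A)) c2 (CTy B S E)"
    by (rule typ_weaken(2)[OF RL c2]) (intro map_le_upd map_le_empty)
  then have "ctyp L (Map.empty(y \<mapsto> Bop)) (Do x c1 c2) (CTy B S E)" using c1 by (rule vtyp_ctyp.ty_do[rotated])
  then show ?case unfolding C by (rule vtyp_ctyp.ty_op[OF S V])
next
  case (step_with c c' v)
  then show ?case by (auto elim!: With_tE intro: vtyp_ctyp.ty_with)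
next
  case (step_with_return x cr h v)
  from step_with_return obtain C0 where H: "vtyp L Map.empty (Handler x cr h) (THnd C0 C)"
    and R: "ctyp L Map.empty (Return v) C0" by (auto elim: With_tE)
  from H obtain A S E where C0: "C0 = CTy A S E" and cr: "ctyp L (Map.empty(x \<mapsto> A)) cr C"
    by (auto elim: Hnd_tE)
  from R C0 have V: "vtyp L Map.empty v A" by (auto elim: Ret_tE)
  show ?case using typ_subst(2)[OF RL V cr] by simp
next
  case (step_with_op h op x k cop xr cr v y c)
  from step_with_op.prems obtain C0 where H: "vtyp L Map.empty (Handler xr cr h) (THnd C0 C)"
    and O: "ctyp L Map.empty (Op op v y c) C0" by (auto elim: With_tE)
  from H obtain A S E where C0: "C0 = CTy A S E" and Lh: "L Map.empty h E S C"
    by (auto elim: Hnd_tE)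
  from O C0 obtain Aop Bop where S: "fmlookup S op = Some (Aop, Bop)" and V: "vtyp L Map.empty v Aop"
    and c: "ctyp L (Map.empty(y \<mapsto> Bop)) c (CTy A S E)" by (auto elim: Op_tE)
  have cop: "ctyp L (Map.empty(x \<mapsto> Aop, k \<mapsto> TArr Bop C)) cop C"
    using RL_clauses[OF RL Lh] step_with_op.hyps S unfolding clauses_typ_def by blast
  have "vtyp L (Map.empty(y \<mapsto> Bop)) (Handler xr cr h) (THnd (CTy A S E) C)"
    using vtyp_closed[OF RL H[unfolded C0]] .
  then have "ctyp L (Map.empty(y \<mapsto> Bop)) (With (Handler xr cr h) c) C" using c by (rule vtyp_ctyp.ty_with)
  then have FT: "vtyp L Map.empty (Fun y (With (Handler xr cr h) c)) (TArr Bop C)" by (rule vtyp_ctyp.ty_fun)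
  have "ctyp L (Map.empty(x \<mapsto> Aop)) (subst_c cop k (Fun y (With (Handler xr cr h) c))) C"
    by (rule typ_subst(2)[OF RL FT cop]) simp
  then show ?case by (rule typ_subst(2)[OF RL V]) simp
qed

inductive_cases If_sE: "semc M L \<Gamma> \<eta> (If v c1 c2) C d"
inductive_cases App_sE: "semc M L \<Gamma> \<eta> (App v1 v2) C d"
inductive_cases Ret_sE: "semc M L \<Gamma> \<eta> (Return v) C d"
inductive_cases Op_sE: "semc M L \<Gamma> \<eta> (Op op v y c) C d"
inductive_cases Do_sE: "semc M L \<Gamma> \<eta> (Do x c1 c2) C d"
inductive_cases With_sE: "semc M L \<Gamma> \<eta> (With v c) C d"
inductive_cases Fun_sE: "semv M L \<Gamma> \<eta> (Fun x c) T d"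
inductive_cases Hnd_sE: "semv M L \<Gamma> \<eta> (Handler x cr h) T d"
inductive_cases True_sE: "semv M L \<Gamma> \<eta> TrueV T d"
inductive_cases False_sE: "semv M L \<Gamma> \<eta> FalseV T d"
inductive_cases ret_lE: "lift_rel M A S f H (ret M A S a) d"

context
  fixes M :: "'u model"
  assumes SM: "standard_model M"
begin

lemma handler_F_maps:
  assumes RL: "reasoning_logic L"
    and T: "vtyp L \<Gamma> (Handler x cr h) (THnd (CTy A S E) D)" and ok: "envok M \<Gamma> \<eta>"
    and fr: "\<forall>a\<in>vdom M A. semc M L (\<Gamma>(x \<mapsto> A)) (\<eta>(x := a)) cr D (fr a)"
    and Hop: "\<forall>op y k c Aop Bop. fmlookup h op = Some (y, k, c) \<longrightarrow> fmlookup S op = Some (Aop, Bop) \<longrightarrow>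
       (\<forall>a \<in> vdom M Aop. \<forall>\<kappa>. maps_into \<kappa> (vdom M Bop) (cdom M D) \<longrightarrow>
          semc M L (\<Gamma>(y \<mapsto> Aop, k \<mapsto> TArr Bop D)) (\<eta>(y := a, k := lam M Bop D \<kappa>)) c D
            (Hop op a \<kappa>))"
    and F: "\<forall>t\<in>trees M A S. lift_rel M A S fr Hop t (F t)"
  shows "maps_into F (trees M A S) (cdom M D)"
proof (rule handler_maps[OF SM])
  show "fmdom h = fmdom S" using handler_doms[OF RL T] .
  show "\<forall>a\<in>vdom M A. fr a \<in> cdom M D" using fr sound(2)[OF SM RL] envok_upd[OF ok] by blast
  show "\<forall>t\<in>trees M A S. lift_rel M A S fr Hop t (F t)" by fact
  show "\<forall>op y k c Aop Bop. fmlookup h op = Some (y,k,c) \<longrightarrow> fmlookup S op = Some (Aop,Bop) \<longrightarrow>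
      (\<forall>a\<in>vdom M Aop. \<forall>\<kappa>. maps_into \<kappa> (vdom M Bop) (cdom M D) \<longrightarrow> Hop op a \<kappa> \<in> cdom M D)"
  proof (intro allI impI ballI)
    fix op y k c Aop Bop a \<kappa>
    assume h: "fmlookup h op = Some (y,k,c)" and S: "fmlookup S op = Some (Aop,Bop)"
      and a: "a \<in> vdom M Aop" and m: "maps_into \<kappa> (vdom M Bop) (cdom M D)"
    have "envok M (\<Gamma>(y\<mapsto>Aop, k\<mapsto>TArr Bop D)) (\<eta>(y:=a, k:=lam M Bop D \<kappa>))"
      using envok_upd[OF envok_upd[OF ok a] lam_in[OF SM m]] .
    then show "Hop op a \<kappa> \<in> cdom M D" using sound(2)[OF SM RL] Hop h S a m by blast
  qed
qed

lemma preserve_sem: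
  assumes RL: "reasoning_logic L"
  shows "step c c' \<Longrightarrow> semc M L Map.empty \<eta> c C d \<Longrightarrow> semc M L Map.empty \<eta> c' C d"
proof (induction arbitrary: C d rule: step.induct)
  case (step_if_true c1 c2)
  show ?case
    by (rule If_sE[OF step_if_true.prems]) (use sm_tf[OF SM] in \<open>auto elim: True_sE\<close>)
next
  case (step_if_false c1 c2)
  show ?case
    by (rule If_sE[OF step_if_false.prems]) (use sm_tf[OF SM] in \<open>auto elim: False_sE\<close>)
next
  case (step_beta x c v)
  from step_beta obtain A f a where F: "semv M L Map.empty \<eta> (Fun x c) (TArr A C) f"
    and V: "semv M L Map.empty \<eta> v A a" and d: "d = app M f a"
    by (auto elim: App_sE)
  from F obtain g where f: "f = lam M A C g"
    and g: "\<forall>a\<in>vdom M A. semc M L (Map.empty(x \<mapsto> A)) (\<eta>(x := a)) c C (g a)"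
    by (auto elim: Fun_sE)
  have a: "a \<in> vdom M A" using sound(1)[OF SM RL V envok_empty] .
  have "maps_into g (vdom M A) (cdom M C)"
    unfolding maps_into_def
  proof
    fix a' assume a': "a' \<in> vdom M A"
    have "envok M (Map.empty(x \<mapsto> A)) (\<eta>(x := a'))" by (rule envok_upd[OF envok_empty a'])
    then show "g a' \<in> cdom M C" using g a' sound(2)[OF SM RL] by blast
  qed
  then have "d = g a" using d f a sm_arr_beta[OF SM] by simp
  moreover have "semc M L (Map.empty(x \<mapsto> A)) (\<eta>(x := a)) c C (g a)" using g a by blast
  then have "semc M L Map.empty \<eta> (subst_c c x v) C (g a)"
    by (rule sem_subst(2)[OF RL V]) simp_all
  ultimately show ?case by simp
next
  case (step_do c1 c1' x c2)
  from step_do.prems obtain A B S E t f where C: "C = CTy B S E"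
    and T: "ctyp L Map.empty (Do x c1 c2) (CTy B S E)"
    and c1: "semc M L Map.empty \<eta> c1 (CTy A S E) t"
    and c2: "\<forall>a\<in>vdom M A. semc M L (Map.empty(x \<mapsto> A)) (\<eta>(x := a)) c2 (CTy B S E) (f a)"
    and lr: "lift_rel M A S f (node M B S) t d"
    by (auto elim: Do_sE)
  have T': "ctyp L Map.empty (Do x c1' c2) (CTy B S E)"
    using preserve_typ[OF RL step.step_do[OF step_do.hyps] T] .
  show ?case unfolding C by (rule semv_semc.sem_do[OF T' step_do.IH[OF c1] c2 lr])
next
  case (step_do_return x v c)
  from step_do_return obtain A B S E t f where C: "C = CTy B S E"
    and r: "semc M L Map.empty \<eta> (Return v) (CTy A S E) t"
    and c2: "\<forall>a\<in>vdom M A. semc M L (Map.empty(x \<mapsto> A)) (\<eta>(x := a)) c (CTy B S E) (f a)"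
    and lr: "lift_rel M A S f (node M B S) t d"
    by (auto elim: Do_sE)
  from r obtain a where t: "t = ret M A S a" and V: "semv M L Map.empty \<eta> v A a"
    by (auto elim: Ret_sE)
  have a: "a \<in> vdom M A" using sound(1)[OF SM RL V envok_empty] .
  have "lift_rel M A S f (node M B S) t (f a)" unfolding t using a by (rule lift_ret)
  then have "d = f a" using lift_fun[OF SM lr] by simp
  moreover have "semc M L (Map.empty(x \<mapsto> A)) (\<eta>(x := a)) c (CTy B S E) (f a)" using c2 a by blast
  then have "semc M L Map.empty \<eta> (subst_c c x v) (CTy B S E) (f a)"
    by (rule sem_subst(2)[OF RL V]) simp_all
  ultimately show ?case using C by simp
next
  case (step_do_op x op v y c1 c2)
  from step_do_op obtain A B S E t f where C: "C = CTy B S E"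
    and T: "ctyp L Map.empty (Do x (Op op v y c1) c2) (CTy B S E)"
    and o: "semc M L Map.empty \<eta> (Op op v y c1) (CTy A S E) t"
    and c2: "\<forall>a\<in>vdom M A. semc M L (Map.empty(x \<mapsto> A)) (\<eta>(x := a)) c2 (CTy B S E) (f a)"
    and lr: "lift_rel M A S f (node M B S) t d"
    by (auto elim: Do_sE)
  from o obtain Aop Bop a \<kappa> where t: "t = node M A S op a \<kappa>"
    and To: "ctyp L Map.empty (Op op v y c1) (CTy A S E)"
    and S: "fmlookup S op = Some (Aop, Bop)" and V: "semv M L Map.empty \<eta> v Aop a"
    and k: "\<forall>b\<in>vdom M Bop. semc M L (Map.empty(y \<mapsto> Bop)) (\<eta>(y := b)) c1 (CTy A S E) (\<kappa> b)"
    by (auto elim: Op_sE)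
  have a: "a \<in> vdom M Aop" using sound(1)[OF SM RL V envok_empty] .
  have kt: "\<forall>b\<in>vdom M Bop. \<kappa> b \<in> trees M A S"
  proof
    fix b assume b: "b \<in> vdom M Bop"
    have "envok M (Map.empty(y \<mapsto> Bop)) (\<eta>(y := b))" by (rule envok_upd[OF envok_empty b])
    then show "\<kappa> b \<in> trees M A S" using k b sound(2)[OF SM RL] by fastforce
  qed
  have T': "ctyp L Map.empty (Op op v y (Do x c1 c2)) (CTy B S E)"
    using preserve_typ[OF RL step.step_do_op T] .
  from lr[unfolded t] obtain \<kappa>' where
    d: "d = node M B S op a (\<lambda>b. if b \<in> vdom M Bop then \<kappa>' b else undefined)"
    and lr': "\<forall>b\<in>vdom M Bop. lift_rel M A S f (node M B S) (\<kappa> b) (\<kappa>' b)"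
  proof (cases rule: lift_rel.cases)
    case (lift_ret a')
    then show ?thesis using sm_ret_node[OF SM _ S a, of a' A \<kappa>] kt by (auto simp: maps_into_def)
  next
    case (lift_node op' Aop' Bop' a' \<kappa>2 \<kappa>2')
    have eq: "op = op' \<and> a = a' \<and> (\<forall>b \<in> vdom M Bop. \<kappa> b = \<kappa>2 b)"
      by (rule sm_node_inj[OF SM S a _ lift_node(3,4) _ lift_node(1)])
         (use kt lift_node(5) in \<open>auto simp: maps_into_def\<close>)
    then have same: "Aop' = Aop" "Bop' = Bop" using S lift_node(3) by auto
    show ?thesis
      by (rule that[of \<kappa>2']) (use lift_node eq same in auto)
  qed
  show ?case unfolding C d
  proof (rule semv_semc.sem_op[OF T' S V])
    show "\<forall>b\<in>vdom M Bop. semc M L (Map.empty(y \<mapsto> Bop)) (\<eta>(y := b)) (Do x c1 c2) (CTy B S E)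
             (if b \<in> vdom M Bop then \<kappa>' b else undefined)"
    proof
      fix b assume b: "b \<in> vdom M Bop"
      have Td: "ctyp L (Map.empty(y \<mapsto> Bop)) (Do x c1 c2) (CTy B S E)"
        using T' S by (auto elim!: Op_tE)
      have c2': "\<forall>a\<in>vdom M A. semc M L (Map.empty(y \<mapsto> Bop, x \<mapsto> A)) (\<eta>(y := b, x := a)) c2 (CTy B S E) (f a)"
      proof
        fix a assume "a \<in> vdom M A"
        then have "semc M L (Map.empty(x \<mapsto> A)) (\<eta>(x := a)) c2 (CTy B S E) (f a)" using c2 by blast
        then show "semc M L (Map.empty(y \<mapsto> Bop, x \<mapsto> A)) (\<eta>(y := b, x := a)) c2 (CTy B S E) (f a)"
          by (rule sem_weaken(2)[OF RL]) (auto intro: map_le_upd)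
      qed
      have "semc M L (Map.empty(y \<mapsto> Bop)) (\<eta>(y := b)) (Do x c1 c2) (CTy B S E) (\<kappa>' b)"
        by (rule semv_semc.sem_do[OF Td _ c2']) (use k b lr' in auto)
      then show "semc M L (Map.empty(y \<mapsto> Bop)) (\<eta>(y := b)) (Do x c1 c2) (CTy B S E)
             (if b \<in> vdom M Bop then \<kappa>' b else undefined)" using b by simp
    qed
  qed
next
  case (step_with c c' v)
  from step_with.prems obtain C0 hv t where "semv M L Map.empty \<eta> v (THnd C0 C) hv"
    "semc M L Map.empty \<eta> c C0 t" "d = app M hv t" by (auto elim: With_sE)
  then show ?case using step_with.IH by (auto intro: semv_semc.sem_with)
next
  case (step_with_return x cr h v)
  from step_with_return obtain C0 hv t where H: "semv M L Map.empty \<eta> (Handler x cr h) (THnd C0 C) hv"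
    and R: "semc M L Map.empty \<eta> (Return v) C0 t" and d: "d = app M hv t" by (auto elim: With_sE)
  from H obtain A S E fr Hop F where C0: "C0 = CTy A S E" and hv: "hv = hlam M (CTy A S E) C F"
    and T: "vtyp L Map.empty (Handler x cr h) (THnd (CTy A S E) C)"
    and fr: "\<forall>a\<in>vdom M A. semc M L (Map.empty(x \<mapsto> A)) (\<eta>(x := a)) cr C (fr a)"
    and Hop: "\<forall>op y k c Aop Bop. fmlookup h op = Some (y, k, c) \<longrightarrow> fmlookup S op = Some (Aop, Bop) \<longrightarrow>
       (\<forall>a \<in> vdom M Aop. \<forall>\<kappa>. maps_into \<kappa> (vdom M Bop) (cdom M C) \<longrightarrow>
          semc M L (Map.empty(y \<mapsto> Aop, k \<mapsto> TArr Bop C)) (\<eta>(y := a, k := lam M Bop C \<kappa>)) c C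
            (Hop op a \<kappa>))"
    and F: "\<forall>t\<in>trees M A S. lift_rel M A S fr Hop t (F t)"
    by (auto elim: Hnd_sE)
  from R C0 obtain a where t: "t = ret M A S a" and V: "semv M L Map.empty \<eta> v A a"
    by (auto elim: Ret_sE)
  have a: "a \<in> vdom M A" using sound(1)[OF SM RL V envok_empty] .
  have tt: "t \<in> trees M A S" unfolding t using a by (rule tr_ret)
  have Fm: "maps_into F (trees M A S) (cdom M C)"
    by (rule handler_F_maps[OF RL T envok_empty fr Hop F])
  then have Fm': "maps_into F (cdom M (CTy A S E)) (cdom M C)" by simp
  have "d = F t" using d hv sm_hnd_beta[OF SM Fm'] tt by simp
  moreover have "lift_rel M A S fr Hop t (fr a)" unfolding t using a by (rule lift_ret)
  then have "F t = fr a" using lift_fun[OF SM] F tt by blast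
  moreover have "semc M L (Map.empty(x \<mapsto> A)) (\<eta>(x := a)) cr C (fr a)" using fr a by blast
  then have "semc M L Map.empty \<eta> (subst_c cr x v) C (fr a)"
    by (rule sem_subst(2)[OF RL V]) simp_all
  ultimately show ?case by simp
next
  case (step_with_op h op x k cop xr cr v y c)
  let ?H = "Handler xr cr h"
  from step_with_op.prems obtain C0 hv t where H: "semv M L Map.empty \<eta> ?H (THnd C0 C) hv"
    and O: "semc M L Map.empty \<eta> (Op op v y c) C0 t" and d: "d = app M hv t" by (auto elim: With_sE)
  from H obtain A S E fr Hop F where C0: "C0 = CTy A S E" and hv: "hv = hlam M (CTy A S E) C F"
    and T: "vtyp L Map.empty ?H (THnd (CTy A S E) C)"
    and fr: "\<forall>a\<in>vdom M A. semc M L (Map.empty(xr \<mapsto> A)) (\<eta>(xr := a)) cr C (fr a)"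
    and Hop: "\<forall>op y k c Aop Bop. fmlookup h op = Some (y, k, c) \<longrightarrow> fmlookup S op = Some (Aop, Bop) \<longrightarrow>
       (\<forall>a \<in> vdom M Aop. \<forall>\<kappa>. maps_into \<kappa> (vdom M Bop) (cdom M C) \<longrightarrow>
          semc M L (Map.empty(y \<mapsto> Aop, k \<mapsto> TArr Bop C)) (\<eta>(y := a, k := lam M Bop C \<kappa>)) c C
            (Hop op a \<kappa>))"
    and F: "\<forall>t\<in>trees M A S. lift_rel M A S fr Hop t (F t)"
    by (auto elim: Hnd_sE)
  from O C0 obtain Aop Bop a \<kappa> where t: "t = node M A S op a \<kappa>"
    and S: "fmlookup S op = Some (Aop, Bop)" and V: "semv M L Map.empty \<eta> v Aop a"
    and k: "\<forall>b\<in>vdom M Bop. semc M L (Map.empty(y \<mapsto> Bop)) (\<eta>(y := b)) c (CTy A S E) (\<kappa> b)"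
    by (auto elim: Op_sE)
  have a: "a \<in> vdom M Aop" using sound(1)[OF SM RL V envok_empty] .
  have kt: "\<forall>b\<in>vdom M Bop. \<kappa> b \<in> trees M A S"
  proof
    fix b assume b: "b \<in> vdom M Bop"
    have "envok M (Map.empty(y \<mapsto> Bop)) (\<eta>(y := b))" by (rule envok_upd[OF envok_empty b])
    then show "\<kappa> b \<in> trees M A S" using k b sound(2)[OF SM RL] by fastforce
  qed
  have tt: "t \<in> trees M A S" unfolding t using S a kt by (rule tr_node)
  have Fm: "maps_into F (trees M A S) (cdom M C)"
    by (rule handler_F_maps[OF RL T envok_empty fr Hop F])
  then have Fm': "maps_into F (cdom M (CTy A S E)) (cdom M C)" by simp
  define \<kappa>2 where "\<kappa>2 = (\<lambda>b. if b \<in> vdom M Bop then F (\<kappa> b) else undefined)"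
  have k2m: "maps_into \<kappa>2 (vdom M Bop) (cdom M C)"
    using Fm kt unfolding \<kappa>2_def maps_into_def by auto
  have "lift_rel M A S fr Hop t (Hop op a \<kappa>2)"
    unfolding t \<kappa>2_def
    by (rule lift_node[OF S a kt]) (use F kt in blast)
  then have Ft: "F t = Hop op a \<kappa>2" using lift_fun[OF SM] F tt by blast
  have dd: "d = Hop op a \<kappa>2" using d hv sm_hnd_beta[OF SM Fm'] tt Ft by simp
  have TH: "vtyp L (Map.empty(y \<mapsto> Bop)) ?H (THnd (CTy A S E) C)" using vtyp_closed[OF RL T] .
  have Tc: "ctyp L (Map.empty(y \<mapsto> Bop)) c (CTy A S E)"
    using k sem_typ(2) sm_tf[OF SM] by (metis O C0 Op_tE S ctype.inject option.inject prod.inject)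
  have TF: "vtyp L Map.empty (Fun y (With ?H c)) (TArr Bop C)"
    by (rule vtyp_ctyp.ty_fun, rule vtyp_ctyp.ty_with[OF TH Tc])
  have SF: "semv M L Map.empty \<eta> (Fun y (With ?H c)) (TArr Bop C) (lam M Bop C \<kappa>2)"
  proof (rule semv_semc.sem_fun[OF TF], rule ballI)
    fix b assume b: "b \<in> vdom M Bop"
    have "semv M L (Map.empty(y \<mapsto> Bop)) (\<eta>(y := b)) ?H (THnd (CTy A S E) C) hv"
      using sem_weaken(1)[OF RL H[unfolded C0]] by auto
    then have "semc M L (Map.empty(y \<mapsto> Bop)) (\<eta>(y := b)) (With ?H c) C (app M hv (\<kappa> b))"
      using k b by (blast intro: semv_semc.sem_with)
    moreover have "app M hv (\<kappa> b) = \<kappa>2 b"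
      using hv sm_hnd_beta[OF SM Fm'] kt b unfolding \<kappa>2_def by simp
    ultimately show "semc M L (Map.empty(y \<mapsto> Bop)) (\<eta>(y := b)) (With ?H c) C (\<kappa>2 b)" by simp
  qed
  have cop: "semc M L (Map.empty(x \<mapsto> Aop, k \<mapsto> TArr Bop C)) (\<eta>(x := a, k := lam M Bop C \<kappa>2)) cop C (Hop op a \<kappa>2)"
    using Hop step_with_op.hyps S a k2m by blast
  have "semc M L (Map.empty(x \<mapsto> Aop)) (\<eta>(x := a)) (subst_c cop k (Fun y (With ?H c))) C (Hop op a \<kappa>2)"
    by (rule sem_subst(2)[OF RL SF cop]) simp_all
  then have "semc M L Map.empty \<eta> (subst_c (subst_c cop k (Fun y (With ?H c))) x v) C (Hop op a \<kappa>2)"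
    by (rule sem_subst(2)[OF RL V]) simp_all
  then show ?case using dd by simp
qed

end

theorem proposition6:
  fixes L :: logic and M :: "'u model" and c c' :: comp and C :: ctype
  assumes "reasoning_logic L"
    and "standard_model M"
    and "ctyp L Map.empty c C"
    and "step c c'"
  shows "ctyp L Map.empty c' C \<and>
         (\<forall>\<eta> d. semc M L Map.empty \<eta> c C d \<longrightarrow> semc M L Map.empty \<eta> c' C d)"
  using preserve_typ[OF assms(1) assms(4) assms(3)] preserve_sem[OF assms(2) assms(1) assms(4)] by blast

end
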